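(* Let the data distributions $\mathcal{D}_{\mathrm{train}},\mathcal{D}_{\mathrm{test}}$, the Transformer architecture $P_\theta$, the few-shot training loss $\widehat{L}_{\mathrm{train}}(\theta)$ and the testing losses $L^k_{\mathrm{test}}(\theta)$ be as in the context. For every $\epsilon>0$ there exists a Transformer with parameters $\theta^*$ such that $\big|\widehat{L}_{\mathrm{train}}(\theta^* )-\inf_\theta\widehat{L}_{\mathrm{train}}(\theta)\big|<\epsilon$ and, for $k=2,\dots,K$, $L^k_{\mathrm{test}}(\theta^* )=-1$, i.e. $\Pr_{\mathcal{D}_{\mathrm{test}}}\big[\mathrm{dec}(\mathrm{model}_{\theta^*}(\widetilde{\mathtt{inp}}^k))=\mathrm{dec}(\widetilde{\mathtt{lab}}^k)\big]=1$ (the minimal possible testing loss).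
   Context: Causal structure: $\mathcal{V}_{\mathrm{all}}$ a finite alphabet of vertex symbols, $G=(V,E)$ a directed graph with $V\subseteq\mathcal{V}_{\mathrm{all}}$; each $v\in\mathcal{V}_{\mathrm{all}}$ has a finite value set $\mathtt{VALS}(v)\subset\mathbb{Z}$ and a finite nonempty context-token set $\mathtt{CONT}(v)$ (pairwise disjoint, disjoint from vertices and values); each edge $e=(v_1,v_2)$ carries $\mathtt{op}(e):q\mapsto q+c_e$ mapping $\mathtt{VALS}(v_1)$ into $\mathtt{VALS}(v_2)$. Chains $\mathcal{T}(G)$ are vertex lists with consecutive pairs in $E$; $N$ is the maximal chain length. Special tokens $o^{\mathrm{eq}}$ ("="), $o^{\mathrm{cm}}$ (","), $o^{\mathrm{qu}}$ ("?"), $o^{\mathrm{dlm}}$ (newline); $\mathcal{A}$ is the set of all tokens. Sequences: training sequences interleave a chain $[u_1,\dots,u_M]\in\mathcal{T}(G)$ ($M<N$) with noise vertices from $\mathcal{V}_{\mathrm{all}}\setminus V$ preserving orders; chain values start uniform in $\mathtt{VALS}(u_1)$ and follow $q(u_h)=\mathtt{op}(u_{h-1},u_h)(q(u_{h-1}))$, noise values are uniform in their $\mathtt{VALS}$. Test sequences are chains of length $N$ with values generated the same way, no noise. A sequence $[v_1,q_1,\dots,v_L,q_L]$ is processed into $[v_L,o^{\mathrm{eq}},o^{\mathrm{qu}},c(v_1)_{1..l_1},v_1,o^{\mathrm{eq}},q_1,o^{\mathrm{cm}},\dots,o^{\mathrm{cm}},c(v_L)_{1..l_L},v_L,o^{\mathrm{eq}},q_L]$,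 with $l_i\sim\mathrm{Uniform}\{1,\dots,|\mathtt{CONT}(v_i)|\}$ and the $c(v_i)_\cdot$ drawn from $\mathtt{CONT}(v_i)$ without replacement. For $k\in\{0,\dots,K\}$, a $k$-shot input $\widetilde{\mathtt{inp}}^k$ is $k$ processed sequences with the same vertex list (independent values and context tokens) separated by $o^{\mathrm{dlm}}$, then $o^{\mathrm{dlm}}$, then the prefix of a further such processed sequence up to and including its first $o^{\mathrm{cm}}$; the label $\widetilde{\mathtt{lab}}^k$ (length $d^k$) is the rest of that sequence. $\mathcal{D}_{\mathrm{train}}$/$\mathcal{D}_{\mathrm{test}}$ use training/test sequences. $\mathrm{dec}$ extracts from a processed token string the list of vertex–value pairs (vertex and value in each "vertex, $o^{\mathrm{eq}}$, value"). Transformer: embedding $x_t=W_E(z_t,t)\in\mathbb{R}^d$; layers $x^{(l)}_t=x^{(l-1)}_t+\sum_{h}W_V^{l,h}x^{(l-1)}_{1:t}\,\mathrm{softmax}\big((x^{(l-1)}_{1:t})^\top(W_K^{l,h})^\top W_Q^{l,h}x^{(l-1)}_t\big)$; output $P_\theta(\cdot\mid z_{1:T})=\mathrm{softmax}\big(W_{O_2}\mathrm{relu}(W_{O_1}x^{(L)}_T+W_B)\big)$ over $\mathcal{A}$; $\theta$ is the collection of parameters. $\mathrm{model}_\theta(z)$ is greedy decoding: repeatedly append an argmax token of $P_\theta$ given the current sentence, until the value of the goal vertex (named at the start of the current sequence) is produced. Losses: $\widehat{L}_{\mathrm{train}}(\theta)=-\mathbb{E}_{\mathcal{D}_{\mathrm{train}}}\sum_{k=1}^{K-1}\sum_{t=1}^{d^k-1}\log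 P_\theta\big(\widetilde{\mathtt{lab}}^k_{t+1}\mid\widetilde{\mathtt{inp}}^k+\widetilde{\mathtt{lab}}^k_{1:t}\big)$ and $L^k_{\mathrm{test}}(\theta)=-\Pr_{\mathcal{D}_{\mathrm{test}}}\big[\mathrm{dec}(\mathrm{model}_\theta(\widetilde{\mathtt{inp}}^k))=\mathrm{dec}(\widetilde{\mathtt{lab}}^k)\big]$. *)

theory Defs
  imports "HOL-Probability.Probability"
begin

text \<open>Vertex symbols of type 'v, context tokens of type 'c, values are integers;
  the constructors keep vertices, values, context tokens and the special tokens disjoint.\<close>
datatype ('v, 'c) token = Vert 'v | Val int | Ctx 'c | Eq | Comma | Qu | Dlm

definition is_chain :: "'v set \<Rightarrow> ('v \<times> 'v) set \<Rightarrow> 'v list \<Rightarrow> bool" where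
  "is_chain V E vs \<longleftrightarrow> vs \<noteq> [] \<and> set vs \<subseteq> V \<and>
     (\<forall>i. Suc i < length vs \<longrightarrow> (vs ! i, vs ! Suc i) \<in> E)"

definition chains :: "'v set \<Rightarrow> ('v \<times> 'v) set \<Rightarrow> 'v list set" where
  "chains V E = {vs. is_chain V E vs}"

definition maxlen :: "'v set \<Rightarrow> ('v \<times> 'v) set \<Rightarrow> nat" where
  "maxlen V E = Max (length ` chains V E)"

definition valid_structure ::
  "'v set \<Rightarrow> 'v set \<Rightarrow> ('v \<times> 'v) set \<Rightarrow> ('v \<Rightarrow> int set) \<Rightarrow> ('v \<Rightarrow> 'c set)
   \<Rightarrow> ('v \<times> 'v \<Rightarrow> int) \<Rightarrow> bool" where
  "valid_structure Vall V E VALS CONT c \<longleftrightarrow>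
     finite Vall \<and> V \<subseteq> Vall \<and> E \<subseteq> V \<times> V \<and>
     (\<forall>v\<in>Vall. finite (VALS v) \<and> VALS v \<noteq> {}) \<and>
     (\<forall>v\<in>Vall. finite (CONT v) \<and> CONT v \<noteq> {}) \<and>
     (\<forall>v\<in>Vall. \<forall>w\<in>Vall. v \<noteq> w \<longrightarrow> CONT v \<inter> CONT w = {}) \<and>
     (\<forall>e\<in>E. \<forall>q\<in>VALS (fst e). q + c e \<in> VALS (snd e)) \<and>
     finite (chains V E)"

text \<open>Training vertex lists: a chain of length M < N interleaved (order preserving)
  with noise vertices from Vall - V.  Since chain vertices lie in V and noise vertices
  do not, the chain is recovered as the sublist of vertices in V.\<close>
definition train_list :: "'v set \<Rightarrow> 'v set \<Rightarrow> ('v \<times> 'v) set \<Rightarrow> 'v list \<Rightarrow> bool" where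
  "train_list Vall V E vs \<longleftrightarrow> set vs \<subseteq> Vall \<and>
     is_chain V E (filter (\<lambda>v. v \<in> V) vs) \<and>
     length (filter (\<lambda>v. v \<in> V) vs) < maxlen V E"

definition test_list :: "'v set \<Rightarrow> ('v \<times> 'v) set \<Rightarrow> 'v list \<Rightarrow> bool" where
  "test_list V E vs \<longleftrightarrow> is_chain V E vs \<and> length vs = maxlen V E"

fun seq_pmf :: "'a pmf list \<Rightarrow> 'a list pmf" where
  "seq_pmf [] = return_pmf []"
| "seq_pmf (p # ps) = bind_pmf p (\<lambda>x. map_pmf (Cons x) (seq_pmf ps))"

text \<open>The argument prev records the previous chain vertex and its value.\<close>
fun gen_vals :: "('v \<Rightarrow> int set) \<Rightarrow> ('v \<times> 'v \<Rightarrow> int) \<Rightarrow> 'v set \<Rightarrow> ('v \<times> int) option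
                  \<Rightarrow> 'v list \<Rightarrow> int list pmf" where
  "gen_vals VALS c V prev [] = return_pmf []"
| "gen_vals VALS c V prev (v # vs) =
     (if v \<in> V then
        bind_pmf (case prev of None \<Rightarrow> pmf_of_set (VALS v)
                             | Some (u, q) \<Rightarrow> return_pmf (q + c (u, v)))
          (\<lambda>q. map_pmf (Cons q) (gen_vals VALS c V (Some (v, q)) vs))
      else
        bind_pmf (pmf_of_set (VALS v))
          (\<lambda>q. map_pmf (Cons q) (gen_vals VALS c V prev vs)))"

text \<open>Context tokens: l uniform in 1..|CONT v|, then l tokens drawn without replacement,
  i.e. a uniformly random list of l distinct elements of CONT v.\<close>
definition ctx_pmf :: "('v \<Rightarrow> 'c set) \<Rightarrow> 'v \<Rightarrow> 'c list pmf" where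
  "ctx_pmf CONT v =
     bind_pmf (pmf_of_set {1..card (CONT v)})
       (\<lambda>l. pmf_of_set {xs. distinct xs \<and> set xs \<subseteq> CONT v \<and> length xs = l})"

fun join_comma :: "('v, 'c) token list list \<Rightarrow> ('v, 'c) token list" where
  "join_comma [] = []"
| "join_comma [b] = b"
| "join_comma (b # bs) = b @ [Comma] @ join_comma bs"

definition process :: "'v list \<Rightarrow> int list \<Rightarrow> 'c list list \<Rightarrow> ('v, 'c) token list" where
  "process vs qs cs =
     [Vert (last vs), Eq, Qu] @
     join_comma (map (\<lambda>((v, q), cv). map Ctx cv @ [Vert v, Eq, Val q]) (zip (zip vs qs) cs))"

definition proc_pmf :: "('v \<Rightarrow> int set) \<Rightarrow> ('v \<Rightarrow> 'c set) \<Rightarrow> ('v \<times> 'v \<Rightarrow> int) \<Rightarrow> 'v set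
                         \<Rightarrow> 'v list \<Rightarrow> ('v, 'c) token list pmf" where
  "proc_pmf VALS CONT c V vs =
     bind_pmf (gen_vals VALS c V None vs) (\<lambda>qs.
       map_pmf (process vs qs) (seq_pmf (map (ctx_pmf CONT) vs)))"

definition split_comma :: "('v, 'c) token list \<Rightarrow> ('v, 'c) token list \<times> ('v, 'c) token list" where
  "split_comma s =
     (if Comma \<in> set s then (takeWhile (\<lambda>x. x \<noteq> Comma) s @ [Comma], tl (dropWhile (\<lambda>x. x \<noteq> Comma) s))
      else (s, []))"

definition mk_kshot :: "('v, 'c) token list list \<Rightarrow> ('v, 'c) token list
                        \<Rightarrow> ('v, 'c) token list \<times> ('v, 'c) token list" where
  "mk_kshot shots s = (concat (map (\<lambda>x. x @ [Dlm]) shots) @ fst (split_comma s), snd (split_comma s))"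

definition kshot_pmf :: "('v \<Rightarrow> int set) \<Rightarrow> ('v \<Rightarrow> 'c set) \<Rightarrow> ('v \<times> 'v \<Rightarrow> int) \<Rightarrow> 'v set
                         \<Rightarrow> nat \<Rightarrow> 'v list \<Rightarrow> (('v, 'c) token list \<times> ('v, 'c) token list) pmf" where
  "kshot_pmf VALS CONT c V k vs =
     map_pmf (\<lambda>ss. mk_kshot (take k ss) (ss ! k))
       (seq_pmf (replicate (Suc k) (proc_pmf VALS CONT c V vs)))"

definition data_pmf :: "('v \<Rightarrow> int set) \<Rightarrow> ('v \<Rightarrow> 'c set) \<Rightarrow> ('v \<times> 'v \<Rightarrow> int) \<Rightarrow> 'v set
                        \<Rightarrow> 'v list pmf \<Rightarrow> nat \<Rightarrow> (('v, 'c) token list \<times> ('v, 'c) token list) pmf" where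
  "data_pmf VALS CONT c V Dv k = bind_pmf Dv (kshot_pmf VALS CONT c V k)"

definition alphabet :: "'v set \<Rightarrow> ('v \<Rightarrow> int set) \<Rightarrow> ('v \<Rightarrow> 'c set) \<Rightarrow> ('v, 'c) token set" where
  "alphabet Vall VALS CONT =
     Vert ` Vall \<union> Val ` (\<Union>v\<in>Vall. VALS v) \<union> Ctx ` (\<Union>v\<in>Vall. CONT v) \<union> {Eq, Comma, Qu, Dlm}"

fun dec :: "('v, 'c) token list \<Rightarrow> ('v \<times> int) list" where
  "dec (Vert v # Eq # Val q # rest) = (v, q) # dec rest"
| "dec (x # rest) = dec rest"
| "dec [] = []"

text \<open>Vectors are nat => real (coordinates below the relevant dimension matter);
  matrices are nat => nat => real.  Layer/head indexed matrices take layer l and head h first.\<close>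
record ('v, 'c) tparams =
  dim :: nat
  nlayers :: nat
  nheads :: nat
  kdim :: nat
  hdim :: nat
  WE :: "('v, 'c) token \<Rightarrow> nat \<Rightarrow> nat \<Rightarrow> real"
  WQ :: "nat \<Rightarrow> nat \<Rightarrow> nat \<Rightarrow> nat \<Rightarrow> real"
  WK :: "nat \<Rightarrow> nat \<Rightarrow> nat \<Rightarrow> nat \<Rightarrow> real"
  WV :: "nat \<Rightarrow> nat \<Rightarrow> nat \<Rightarrow> nat \<Rightarrow> real"
  WO1 :: "nat \<Rightarrow> nat \<Rightarrow> real"
  WB :: "nat \<Rightarrow> real"
  WO2 :: "('v, 'c) token \<Rightarrow> nat \<Rightarrow> real"

definition dotp :: "nat \<Rightarrow> (nat \<Rightarrow> real) \<Rightarrow> (nat \<Rightarrow> real) \<Rightarrow> real" where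
  "dotp n x y = (\<Sum>i<n. x i * y i)"

definition matv :: "nat \<Rightarrow> (nat \<Rightarrow> nat \<Rightarrow> real) \<Rightarrow> (nat \<Rightarrow> real) \<Rightarrow> nat \<Rightarrow> real" where
  "matv n M x = (\<lambda>i. \<Sum>j<n. M i j * x j)"

definition embed :: "('v, 'c) tparams \<Rightarrow> ('v, 'c) token list \<Rightarrow> (nat \<Rightarrow> real) list" where
  "embed \<theta> zs = map (\<lambda>t. WE \<theta> (zs ! t) t) [0..<length zs]"

definition attn_score :: "('v, 'c) tparams \<Rightarrow> nat \<Rightarrow> nat \<Rightarrow> (nat \<Rightarrow> real) list \<Rightarrow> nat \<Rightarrow> nat \<Rightarrow> real" where
  "attn_score \<theta> l h xs s t =
     dotp (kdim \<theta>) (matv (dim \<theta>) (WK \<theta> l h) (xs ! s)) (matv (dim \<theta>) (WQ \<theta> l h) (xs ! t))"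

definition layer :: "('v, 'c) tparams \<Rightarrow> nat \<Rightarrow> (nat \<Rightarrow> real) list \<Rightarrow> (nat \<Rightarrow> real) list" where
  "layer \<theta> l xs = map (\<lambda>t. \<lambda>i. (xs ! t) i +
      (\<Sum>h<nheads \<theta>. \<Sum>s\<le>t.
         (exp (attn_score \<theta> l h xs s t) / (\<Sum>s'\<le>t. exp (attn_score \<theta> l h xs s' t)))
         * matv (dim \<theta>) (WV \<theta> l h) (xs ! s) i))
    [0..<length xs]"

definition forward :: "('v, 'c) tparams \<Rightarrow> ('v, 'c) token list \<Rightarrow> (nat \<Rightarrow> real) list" where
  "forward \<theta> zs = fold (layer \<theta>) [0..<nlayers \<theta>] (embed \<theta> zs)"

definition logit :: "('v, 'c) tparams \<Rightarrow> ('v, 'c) token list \<Rightarrow> ('v, 'c) token \<Rightarrow> real" where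
  "logit \<theta> zs a = (\<Sum>i<hdim \<theta>. WO2 \<theta> a i *
      max 0 ((\<Sum>j<dim \<theta>. WO1 \<theta> i j * last (forward \<theta> zs) j) + WB \<theta> i))"

definition Pmodel :: "('v, 'c) token set \<Rightarrow> ('v, 'c) tparams \<Rightarrow> ('v, 'c) token list
                      \<Rightarrow> ('v, 'c) token \<Rightarrow> real" where
  "Pmodel A \<theta> zs a = exp (logit \<theta> zs a) / (\<Sum>b\<in>A. exp (logit \<theta> zs b))"

definition seq_loss :: "('v, 'c) token set \<Rightarrow> ('v, 'c) tparams \<Rightarrow> ('v, 'c) token list
                        \<Rightarrow> ('v, 'c) token list \<Rightarrow> real" where
  "seq_loss A \<theta> inp lab = (\<Sum>t\<in>{1..<length lab}. - ln (Pmodel A \<theta> (inp @ take t lab) (lab ! t)))"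

definition train_loss :: "'v set \<Rightarrow> ('v \<Rightarrow> int set) \<Rightarrow> ('v \<Rightarrow> 'c set) \<Rightarrow> ('v \<times> 'v \<Rightarrow> int) \<Rightarrow> 'v set
                          \<Rightarrow> nat \<Rightarrow> 'v list pmf \<Rightarrow> ('v, 'c) tparams \<Rightarrow> real" where
  "train_loss Vall VALS CONT c V K Dtr \<theta> =
     (\<Sum>k\<in>{1..<K}. measure_pmf.expectation (data_pmf VALS CONT c V Dtr k)
        (\<lambda>(inp, lab). seq_loss (alphabet Vall VALS CONT) \<theta> inp lab))"

text \<open>The goal vertex token is the first token of the current sequence
  (after the last delimiter) of the input; generation stops as soon as the sentence ends
  with goal, "=", value.  greedy_run records every possible run (any argmax choice).\<close>
definition cur_seq :: "('v, 'c) token list \<Rightarrow> ('v, 'c) token list" where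
  "cur_seq z = rev (takeWhile (\<lambda>x. x \<noteq> Dlm) (rev z))"

definition stops :: "('v, 'c) token list \<Rightarrow> ('v, 'c) token list \<Rightarrow> bool" where
  "stops z out \<longleftrightarrow> (\<exists>pre q. z @ out = pre @ [hd (cur_seq z), Eq, Val q])"

definition is_argmax :: "('v, 'c) token set \<Rightarrow> (('v, 'c) token \<Rightarrow> real) \<Rightarrow> ('v, 'c) token \<Rightarrow> bool" where
  "is_argmax A p a \<longleftrightarrow> a \<in> A \<and> (\<forall>b\<in>A. p b \<le> p a)"

definition greedy_run :: "('v, 'c) token set \<Rightarrow> ('v, 'c) tparams \<Rightarrow> ('v, 'c) token list
                          \<Rightarrow> ('v, 'c) token list \<Rightarrow> bool" where
  "greedy_run A \<theta> z out \<longleftrightarrow>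
     (\<forall>i<length out. is_argmax A (Pmodel A \<theta> (z @ take i out)) (out ! i)) \<and>
     stops z out \<and> (\<forall>i<length out. \<not> stops z (take i out))"

text \<open>Event that model_theta(inp) is defined (greedy decoding terminates) and decodes to dec(lab),
  whichever argmax is chosen at each step.\<close>
definition test_correct :: "('v, 'c) token set \<Rightarrow> ('v, 'c) tparams \<Rightarrow> ('v, 'c) token list
                            \<Rightarrow> ('v, 'c) token list \<Rightarrow> bool" where
  "test_correct A \<theta> inp lab \<longleftrightarrow>
     (\<exists>out. greedy_run A \<theta> inp out) \<and> (\<forall>out. greedy_run A \<theta> inp out \<longrightarrow> dec out = dec lab)"

definition test_loss :: "'v set \<Rightarrow> ('v \<Rightarrow> int set) \<Rightarrow> ('v \<Rightarrow> 'c set) \<Rightarrow> ('v \<times> 'v \<Rightarrow> int) \<Rightarrow> 'v set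
                          \<Rightarrow> 'v list pmf \<Rightarrow> nat \<Rightarrow> ('v, 'c) tparams \<Rightarrow> real" where
  "test_loss Vall VALS CONT c V Dte k \<theta> =
     - measure_pmf.prob (data_pmf VALS CONT c V Dte k)
         {(inp, lab). test_correct (alphabet Vall VALS CONT) \<theta> inp lab}"

end

theory Submission
  imports Defs "HOL-Library.Nat_Bijection"
begin


section \<open>Memorization\<close>

lemma sum3: "(\<Sum>i<3*n. g i) = (\<Sum>k<n. g (3*k) + g (3*k+1) + g (3*k+2))"
  for g :: "nat \<Rightarrow> real"
proof (induction n)
  case 0 then show ?case by simp
next
  case (Suc n)
  have e: "{..<3 * Suc n} = {..<Suc (Suc (Suc (3*n)))}" by simp
  show ?case unfolding e using Suc by (simp add: add.assoc)
qed

lemma sum_lt3: "(\<Sum>j<3. g j) = g 0 + g 1 + g (2::nat)" for g :: "nat \<Rightarrow> real"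
  by (simp add: eval_nat_numeral)

lemma forward_last:
  fixes \<theta> :: "('v,'c) tparams"
  assumes "nlayers \<theta> = 1" "nheads \<theta> = 1" "kdim \<theta> = 0" "dim \<theta> = 3"
    and "WV \<theta> 0 0 = (\<lambda>i j. if i = 2 \<and> j = 1 then 1 else 0)" and "z \<noteq> []"
  shows "last (forward \<theta> z) = (\<lambda>i. WE \<theta> (z ! (length z - 1)) (length z - 1) i +
            (if i = 2 then (\<Sum>s<length z. WE \<theta> (z!s) s 1) / real (length z) else 0))"
proof -
  let ?n = "length z"
  have n0: "?n > 0" using assms(6) by simp
  have fw: "forward \<theta> z = layer \<theta> 0 (embed \<theta> z)"
    unfolding forward_def using assms(1) by simp
  have le: "length (embed \<theta> z) = ?n" by (simp add: embed_def)
  have em: "\<And>s. s < ?n \<Longrightarrow> embed \<theta> z ! s = WE \<theta> (z!s) s" by (simp add: embed_def)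
  have sc: "\<And>s t. attn_score \<theta> 0 0 (embed \<theta> z) s t = 0"
    by (simp add: attn_score_def dotp_def assms(3))
  have mv: "\<And>x i. matv (dim \<theta>) (WV \<theta> 0 0) x i = (if i = 2 then x 1 else 0)"
    by (simp add: matv_def assms(4,5) numeral_3_eq_3)
  have "last (layer \<theta> 0 (embed \<theta> z)) = (\<lambda>i. (embed \<theta> z ! (?n - 1)) i +
      (\<Sum>h<nheads \<theta>. \<Sum>s\<le>?n - 1.
         (exp (attn_score \<theta> 0 h (embed \<theta> z) s (?n - 1)) / (\<Sum>s'\<le>?n - 1. exp (attn_score \<theta> 0 h (embed \<theta> z) s' (?n - 1))))
         * matv (dim \<theta>) (WV \<theta> 0 h) (embed \<theta> z ! s) i))"
    unfolding layer_def le using n0 by (simp add: last_map)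
  also have "\<dots> = (\<lambda>i. WE \<theta> (z ! (?n - 1)) (?n - 1) i +
            (\<Sum>s\<le>?n - 1. (1 / real ?n) * (if i = 2 then WE \<theta> (z!s) s 1 else 0)))"
  proof -
    have em': "\<And>s. s \<le> ?n - 1 \<Longrightarrow> embed \<theta> z ! s = WE \<theta> (z!s) s"
      using n0 em by (metis Suc_pred' less_Suc_eq_le)
    show ?thesis using n0 by (auto simp: assms(2) sc mv em em' intro!: ext sum.cong)
  qed
  also have "\<dots> = (\<lambda>i. WE \<theta> (z ! (?n - 1)) (?n - 1) i +
            (if i = 2 then (\<Sum>s<?n. WE \<theta> (z!s) s 1) / real ?n else 0))"
  proof -
    have e: "{..?n - 1} = {..<?n}" using n0 by (metis Suc_pred' lessThan_Suc_atMost)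
    have "\<And>i::nat. (\<Sum>s<?n. (1 / real ?n) * (if i = 2 then WE \<theta> (z!s) s 1 else 0)) =
       (if i = 2 then (\<Sum>s<?n. WE \<theta> (z!s) s 1) / real ?n else 0)"
      by (simp add: sum_divide_distrib)
    then show ?thesis unfolding e by simp
  qed
  finally show ?thesis using fw by simp
qed

definition hat :: "real \<Rightarrow> real \<Rightarrow> real" where
  "hat d x = max 0 (x + d) - 2 * max 0 x + max 0 (x - d)"

lemma hat0: "d > 0 \<Longrightarrow> hat d 0 = d" by (simp add: hat_def)
lemma hat_far: "d > 0 \<Longrightarrow> d \<le> \<bar>x\<bar> \<Longrightarrow> hat d x = 0" by (auto simp: hat_def abs_if max_def)

lemma memorize:
  fixes S :: "('v,'c) token list set" and h :: "('v,'c) token list \<Rightarrow> ('v,'c) token \<Rightarrow> real"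
  assumes finS: "finite S" and ne: "[] \<notin> S"
  shows "\<exists>\<theta>::('v,'c) tparams. \<forall>z\<in>S. \<forall>a. logit \<theta> z a = h z a"
proof -
  define TK where "TK = \<Union>(set ` S)"
  have "finite TK" unfolding TK_def using finS by auto
  then obtain f :: "('v,'c) token \<Rightarrow> nat" and m where finj: "inj_on f TK"
    using finite_imp_inj_to_nat_seg by blast
  define code where "code t p = prod_encode (f t, p)" for t p
  define avg where "avg z = (\<Sum>s<length z. (2::real) ^ code (z!s) s) / real (length z)"
    for z :: "('v,'c) token list"
  define \<alpha> where "\<alpha> = 1 + (\<Sum>z\<in>S. avg z)"
  define u where "u z = \<alpha> * real (length z - 1) + avg z" for z :: "('v,'c) token list"
  have avgpos: "avg z > 0" if "z \<noteq> []" for z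
  proof -
    have "(\<Sum>s<length z. (2::real) ^ code (z!s) s) > 0"
      using that by (intro sum_pos) auto
    then show ?thesis unfolding avg_def using that by simp
  qed
  have avg_nn: "avg z \<ge> 0" for z unfolding avg_def by (intro divide_nonneg_nonneg sum_nonneg) auto
  have avglt: "avg z < \<alpha>" if "z \<in> S" for z
  proof -
    have "avg z \<le> (\<Sum>z\<in>S. avg z)" using finS that avg_nn by (intro member_le_sum) auto
    then show ?thesis unfolding \<alpha>_def by simp
  qed
  have alpha_pos: "\<alpha> > 0" using avglt ne avg_nn unfolding \<alpha>_def
    by (smt (verit) sum_nonneg)
  have len_eq: "length z = length z'" if "z \<in> S" "z' \<in> S" "u z = u z'" for z z'
  proof (rule ccontr)
    assume "length z \<noteq> length z'"
    then consider "length z < length z'" | "length z' < length z" by linarith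
    then show False
    proof cases
      case 1
      have "real (length z' - 1) \<ge> real (length z - 1) + 1" using 1 ne that by (cases z; cases z') auto
      then have "\<alpha> * (real (length z - 1) + 1) \<le> \<alpha> * real (length z' - 1)"
        using alpha_pos by (intro mult_left_mono) auto
      then have "\<alpha> * real (length z' - 1) \<ge> \<alpha> * real (length z - 1) + \<alpha>"
        by (simp add: distrib_left)
      then show False using that avglt[of z] avg_nn[of z'] unfolding u_def by linarith
    next
      case 2
      have "real (length z - 1) \<ge> real (length z' - 1) + 1" using 2 ne that by (cases z; cases z') auto
      then have "\<alpha> * (real (length z' - 1) + 1) \<le> \<alpha> * real (length z - 1)"
        using alpha_pos by (intro mult_left_mono) auto
      then have "\<alpha> * real (length z - 1) \<ge> \<alpha> * real (length z' - 1) + \<alpha>"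
        by (simp add: distrib_left)
      then show False using that avglt[of z'] avg_nn[of z] unfolding u_def by linarith
    qed
  qed
  have cinj: "inj_on (\<lambda>s. code (z!s) s) A" for z :: "('v,'c) token list" and A
    by (auto simp: inj_on_def code_def)
  have se: "(\<Sum>s<length z. (2::real) ^ code (z!s) s) = real (set_encode ((\<lambda>s. code (z!s) s) ` {..<length z}))"
    for z :: "('v,'c) token list"
  proof -
    have "set_encode ((\<lambda>s. code (z!s) s) ` {..<length z}) = (\<Sum>s<length z. 2 ^ code (z!s) s)"
      unfolding set_encode_def by (subst sum.reindex[OF cinj]) simp
    then show ?thesis by simp
  qed
  have uinj: "z = z'" if "z \<in> S" "z' \<in> S" "u z = u z'" for z z'
  proof -
    have L: "length z = length z'" using len_eq that by blast
    have "avg z = avg z'" using that L unfolding u_def by simp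
    then have "(\<Sum>s<length z. (2::real) ^ code (z!s) s) = (\<Sum>s<length z. (2::real) ^ code (z'!s) s)"
      unfolding avg_def L using ne that by (cases "z' = []") auto
    then have "real (set_encode ((\<lambda>s. code (z!s) s) ` {..<length z})) = real (set_encode ((\<lambda>s. code (z'!s) s) ` {..<length z}))"
      using se[of z] se[of z'] L by simp
    then have "set_encode ((\<lambda>s. code (z!s) s) ` {..<length z}) = set_encode ((\<lambda>s. code (z'!s) s) ` {..<length z})"
      by linarith
    then have SE: "(\<lambda>s. code (z!s) s) ` {..<length z} = (\<lambda>s. code (z'!s) s) ` {..<length z}"
      by (simp add: set_encode_eq)
    show ?thesis
    proof (rule nth_equalityI)
      show "length z = length z'" by (rule L)
      fix s assume s: "s < length z"
      then have "code (z!s) s \<in> (\<lambda>s. code (z'!s) s) ` {..<length z}" using SE by blast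
      then obtain t where "code (z!s) s = code (z'!t) t" by auto
      then have "f (z!s) = f (z'!s)" unfolding code_def by auto
      moreover have "z!s \<in> TK" "z'!s \<in> TK" unfolding TK_def using that s L nth_mem by (metis UN_I, metis UN_I)
      ultimately show "z!s = z'!s" using finj by (auto dest: inj_onD)
    qed
  qed
  define D where "D = {\<bar>u y - u y'\<bar> | y y'. y \<in> S \<and> y' \<in> S \<and> y \<noteq> y'}"
  have finD: "finite D"
  proof -
    have "D \<subseteq> (\<lambda>(y,y'). \<bar>u y - u y'\<bar>) ` (S \<times> S)" unfolding D_def by auto
    then show ?thesis using finS finite_subset by blast
  qed
  have Dpos: "\<forall>x\<in>D. x > 0" unfolding D_def using uinj by force
  define \<delta> where "\<delta> = (if D = {} then 1 else Min D)"
  have dpos: "\<delta> > 0" unfolding \<delta>_def using finD Dpos by auto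
  have dle: "\<delta> \<le> \<bar>u y - u y'\<bar>" if "y \<in> S" "y' \<in> S" "y \<noteq> y'" for y y'
  proof -
    have "\<bar>u y - u y'\<bar> \<in> D" unfolding D_def using that by blast
    then show ?thesis unfolding \<delta>_def using finD by auto
  qed
  obtain ys where ys: "set ys = S" "distinct ys" using finite_distinct_list[OF finS] by blast
  define n where "n = length ys"
  define \<theta> :: "('v,'c) tparams" where "\<theta> = \<lparr> dim = 3, nlayers = 1, nheads = 1, kdim = 0, hdim = 3*n,
    WE = \<lambda>t p j. if j = 0 then real p else if j = 1 then 2 ^ code t p else 0,
    WQ = \<lambda>_ _ _ _. 0, WK = \<lambda>_ _ _ _. 0,
    WV = \<lambda>_ _ i j. if i = 2 \<and> j = 1 then 1 else 0,
    WO1 = \<lambda>i j. if j = 0 then \<alpha> else if j = 2 then 1 else 0,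
    WB = \<lambda>i. - u (ys!(i div 3)) + (if i mod 3 = 0 then \<delta> else if i mod 3 = 1 then 0 else -\<delta>),
    WO2 = \<lambda>a i. h (ys!(i div 3)) a / \<delta> * (if i mod 3 = 1 then -2 else 1) \<rparr>"
  have "logit \<theta> z a = h z a" if zS: "z \<in> S" for z a
  proof -
    have zne: "z \<noteq> []" using zS ne by auto
    have th: "dim \<theta> = 3" "nlayers \<theta> = 1" "nheads \<theta> = 1" "kdim \<theta> = 0" "hdim \<theta> = 3*n"
      "WE \<theta> = (\<lambda>t p j. if j = 0 then real p else if j = 1 then 2 ^ code t p else 0)"
      "WV \<theta> 0 0 = (\<lambda>i j. if i = 2 \<and> j = 1 then 1 else 0)"
      "WO1 \<theta> = (\<lambda>i j. if j = 0 then \<alpha> else if j = 2 then 1 else 0)"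
      "WB \<theta> = (\<lambda>i. - u (ys!(i div 3)) + (if i mod 3 = 0 then \<delta> else if i mod 3 = 1 then 0 else -\<delta>))"
      "WO2 \<theta> = (\<lambda>a i. h (ys!(i div 3)) a / \<delta> * (if i mod 3 = 1 then -2 else 1))"
      by (simp_all add: \<theta>_def)
    have LF: "last (forward \<theta> z) = (\<lambda>i. WE \<theta> (z ! (length z - 1)) (length z - 1) i +
            (if i = 2 then (\<Sum>s<length z. WE \<theta> (z!s) s 1) / real (length z) else 0))"
      by (rule forward_last) (auto simp: th zne)
    have L0: "last (forward \<theta> z) 0 = real (length z - 1)" unfolding LF by (simp add: th)
    have L1: "last (forward \<theta> z) 2 = avg z" unfolding LF by (simp add: th avg_def)
    have inner: "(\<Sum>j<dim \<theta>. WO1 \<theta> i j * last (forward \<theta> z) j) = u z" for i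
      by (simp add: th sum_lt3 u_def L0 L1)
    have "logit \<theta> z a = (\<Sum>i<3*n. WO2 \<theta> a i * max 0 (u z + WB \<theta> i))"
      unfolding logit_def inner by (simp add: th)
    also have "\<dots> = (\<Sum>k<n. h (ys!k) a / \<delta> * hat \<delta> (u z - u (ys!k)))"
      unfolding sum3
    proof (rule sum.cong)
      fix k :: nat
      have d: "(3*k) div 3 = k" "(3*k) mod 3 = 0" "(3*k+1) div 3 = k" "(3*k+1) mod 3 = 1"
         "(3*k+2) div 3 = k" "(3*k+2) mod 3 = 2" by presburger+
      let ?c = "h (ys!k) a / \<delta>" and ?x = "u z - u (ys!k)"
      have "WO2 \<theta> a (3*k) * max 0 (u z + WB \<theta> (3*k)) + WO2 \<theta> a (3*k+1) * max 0 (u z + WB \<theta> (3*k+1))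
          + WO2 \<theta> a (3*k+2) * max 0 (u z + WB \<theta> (3*k+2))
          = ?c * max 0 (?x + \<delta>) + ?c * (-2) * max 0 ?x + ?c * max 0 (?x - \<delta>)"
        unfolding th d by (simp add: algebra_simps)
      also have "\<dots> = ?c * hat \<delta> ?x" unfolding hat_def by (simp add: algebra_simps)
      finally show "WO2 \<theta> a (3*k) * max 0 (u z + WB \<theta> (3*k)) + WO2 \<theta> a (3*k+1) * max 0 (u z + WB \<theta> (3*k+1))
          + WO2 \<theta> a (3*k+2) * max 0 (u z + WB \<theta> (3*k+2)) = ?c * hat \<delta> ?x" .
    qed simp
    also have "\<dots> = (\<Sum>k<n. if ys!k = z then h z a else 0)"
    proof (rule sum.cong)
      fix k assume "k \<in> {..<n}"
      then have kS: "ys!k \<in> S" using ys n_def by auto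
      show "h (ys!k) a / \<delta> * hat \<delta> (u z - u (ys!k)) = (if ys!k = z then h z a else 0)"
      proof (cases "ys!k = z")
        case True then show ?thesis using dpos by (simp add: hat0)
      next
        case False
        then have "\<delta> \<le> \<bar>u z - u (ys!k)\<bar>" using dle[OF zS kS] by auto
        then show ?thesis using False dpos by (simp add: hat_far)
      qed
    qed simp
    also have "\<dots> = h z a"
    proof -
      obtain k0 where k0: "k0 < n" "ys!k0 = z" using zS ys n_def by (metis in_set_conv_nth)
      have "(\<Sum>k<n. if ys!k = z then h z a else 0) = (\<Sum>k<n. if k = k0 then h z a else 0)"
        using k0 ys(2) n_def by (intro sum.cong) (auto simp: nth_eq_iff_index_eq)
      then show ?thesis using k0 by simp
    qed
    finally show ?thesis .
  qed
  then show ?thesis by blast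
qed



section \<open>Supports\<close>

lemma set_seq_pmf: "set_pmf (seq_pmf ps) = {xs. list_all2 (\<lambda>x p. x \<in> set_pmf p) xs ps}"
proof (induction ps)
  case Nil then show ?case by auto
next
  case (Cons p ps)
  show ?case by (auto simp: Cons set_bind_pmf list_all2_Cons2)
qed

lemma finite_seq_pmf: "(\<forall>p\<in>set ps. finite (set_pmf p)) \<Longrightarrow> finite (set_pmf (seq_pmf ps))"
proof (induction ps)
  case Nil then show ?case by auto
next
  case (Cons p ps)
  then show ?case by (auto simp: set_bind_pmf)
qed

lemma list_all2_replicate2: "list_all2 P xs (replicate n y) \<longleftrightarrow> length xs = n \<and> (\<forall>x\<in>set xs. P x y)"
  by (auto simp: list_all2_conv_all_nth all_set_conv_all_nth)

definition chainE :: "('v \<times> 'v) set \<Rightarrow> 'v list \<Rightarrow> bool" where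
  "chainE E xs \<longleftrightarrow> (\<forall>i. Suc i < length xs \<longrightarrow> (xs ! i, xs ! Suc i) \<in> E)"

lemma chainE_Cons: "chainE E (x # xs) \<longleftrightarrow> (xs \<noteq> [] \<longrightarrow> (x, hd xs) \<in> E) \<and> chainE E xs"
proof
  assume H: "chainE E (x # xs)"
  have "xs \<noteq> [] \<longrightarrow> (x, hd xs) \<in> E" using H[unfolded chainE_def, rule_format, of 0] by (auto simp: hd_conv_nth)
  moreover have "chainE E xs" unfolding chainE_def using H[unfolded chainE_def] by (metis Suc_less_eq length_Cons nth_Cons_Suc)
  ultimately show "(xs \<noteq> [] \<longrightarrow> (x, hd xs) \<in> E) \<and> chainE E xs" by blast
next
  assume H: "(xs \<noteq> [] \<longrightarrow> (x, hd xs) \<in> E) \<and> chainE E xs"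
  show "chainE E (x # xs)" unfolding chainE_def
  proof (intro allI impI)
    fix i assume i: "Suc i < length (x # xs)"
    show "((x # xs) ! i, (x # xs) ! Suc i) \<in> E"
    proof (cases i)
      case 0 then show ?thesis using H i by (auto simp: hd_conv_nth)
    next
      case (Suc j) then show ?thesis using H i unfolding chainE_def by auto
    qed
  qed
qed

lemma gen_vals_fin:
  assumes VA: "\<forall>v\<in>Vall. finite (VALS v) \<and> VALS v \<noteq> {}"
  shows "set vs \<subseteq> Vall \<Longrightarrow> finite (set_pmf (gen_vals VALS c V prev vs))"
proof (induction vs arbitrary: prev)
  case Nil then show ?case by simp
next
  case (Cons v vs)
  have fv: "finite (VALS v)" "VALS v \<noteq> {}" using VA Cons.prems by auto
  show ?case
  proof (cases "v \<in> V")
    case True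
    show ?thesis
    proof (cases prev)
      case None then show ?thesis using True Cons fv by (auto simp: set_bind_pmf)
    next
      case (Some p) then show ?thesis using True Cons by (cases p) (auto simp: set_bind_pmf)
    qed
  next
    case False then show ?thesis using Cons fv by (auto simp: set_bind_pmf)
  qed
qed

lemma gen_vals_len: "qs \<in> set_pmf (gen_vals VALS c V prev vs) \<Longrightarrow> length qs = length vs"
proof (induction vs arbitrary: prev qs)
  case Nil then show ?case by simp
next
  case (Cons v vs)
  show ?case
  proof (cases "v \<in> V")
    case True
    then show ?thesis using Cons by (auto simp: set_bind_pmf split: option.splits)
  next
    case False then show ?thesis using Cons by (auto simp: set_bind_pmf)
  qed
qed

lemma gen_vals_vals:
  assumes VA: "\<forall>v\<in>Vall. finite (VALS v) \<and> VALS v \<noteq> {}"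
    and EV: "\<forall>e\<in>E. \<forall>q\<in>VALS (fst e). q + c e \<in> VALS (snd e)"
  shows "set vs \<subseteq> Vall \<Longrightarrow> chainE E (filter (\<lambda>v. v \<in> V) vs) \<Longrightarrow>
    (case prev of None \<Rightarrow> True | Some (u, q) \<Rightarrow> q \<in> VALS u \<and>
        (filter (\<lambda>v. v \<in> V) vs \<noteq> [] \<longrightarrow> (u, hd (filter (\<lambda>v. v \<in> V) vs)) \<in> E)) \<Longrightarrow>
    qs \<in> set_pmf (gen_vals VALS c V prev vs) \<Longrightarrow> list_all2 (\<lambda>q v. q \<in> VALS v) qs vs"
proof (induction vs arbitrary: prev qs)
  case Nil then show ?case by simp
next
  case (Cons v vs)
  have fv: "finite (VALS v)" "VALS v \<noteq> {}" "v \<in> Vall" using VA Cons.prems by auto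
  show ?case
  proof (cases "v \<in> V")
    case True
    then have fl: "filter (\<lambda>v. v \<in> V) (v # vs) = v # filter (\<lambda>v. v \<in> V) vs" by simp
    have ch: "chainE E (filter (\<lambda>v. v \<in> V) vs)"
      and hdE: "filter (\<lambda>v. v \<in> V) vs \<noteq> [] \<longrightarrow> (v, hd (filter (\<lambda>v. v \<in> V) vs)) \<in> E"
      using Cons.prems(2) unfolding fl chainE_Cons by auto
    obtain q qs' where qs: "qs = q # qs'" and q: "q \<in> VALS v"
      and qs': "qs' \<in> set_pmf (gen_vals VALS c V (Some (v, q)) vs)"
    proof (cases prev)
      case None
      then show ?thesis using that Cons.prems(4) True fv by (auto simp: set_bind_pmf)
    next
      case (Some p)
      obtain u q0 where p: "p = (u, q0)" by (cases p)
      have q0: "q0 \<in> VALS u" and uv: "(u, v) \<in> E" using Cons.prems(3) Some p fl by auto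
      have "q0 + c (u, v) \<in> VALS v" using EV uv q0 by force
      then show ?thesis using that Cons.prems(4) True Some p by (auto simp: set_bind_pmf)
    qed
    have "list_all2 (\<lambda>q v. q \<in> VALS v) qs' vs"
      using Cons.IH[of "Some (v, q)" qs'] Cons.prems(1) ch hdE q qs' by auto
    then show ?thesis using qs q by simp
  next
    case False
    then have fl: "filter (\<lambda>v. v \<in> V) (v # vs) = filter (\<lambda>v. v \<in> V) vs" by simp
    obtain q qs' where qs: "qs = q # qs'" and q: "q \<in> VALS v"
      and qs': "qs' \<in> set_pmf (gen_vals VALS c V prev vs)"
      using Cons.prems(4) False fv by (auto simp: set_bind_pmf)
    have "list_all2 (\<lambda>q v. q \<in> VALS v) qs' vs"
      using Cons.IH[of prev qs'] Cons.prems(1,2,3) qs' unfolding fl by simp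
    then show ?thesis using qs q by simp
  qed
qed

fun gvl :: "('v \<times> 'v \<Rightarrow> int) \<Rightarrow> 'v \<Rightarrow> int \<Rightarrow> 'v list \<Rightarrow> int list" where
  "gvl c u q [] = []"
| "gvl c u q (v # vs) = (q + c (u, v)) # gvl c v (q + c (u, v)) vs"

lemma gen_vals_det: "set vs \<subseteq> V \<Longrightarrow> gen_vals VALS c V (Some (u, q)) vs = return_pmf (gvl c u q vs)"
proof (induction vs arbitrary: u q)
  case Nil then show ?case by simp
next
  case (Cons v vs) then show ?case by (simp add: map_return_pmf bind_return_pmf)
qed

lemma gen_vals_test:
  assumes "set (v # vs) \<subseteq> V" "qs \<in> set_pmf (gen_vals VALS c V None (v # vs))"
  shows "\<exists>q. qs = q # gvl c v q vs"
  using assms by (auto simp: gen_vals_det set_bind_pmf)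

lemma ctx_pmf_set:
  assumes "finite (CONT v)" "CONT v \<noteq> {}"
  shows "finite (set_pmf (ctx_pmf CONT v)) \<and> (\<forall>cs\<in>set_pmf (ctx_pmf CONT v). set cs \<subseteq> CONT v)"
proof -
  define X where "X l = {xs. distinct xs \<and> set xs \<subseteq> CONT v \<and> length xs = l}" for l
  have finX: "finite (X l)" for l
    by (rule finite_subset[OF _ finite_lists_length_eq[OF assms(1), of l]]) (auto simp: X_def)
  obtain ys where ys: "distinct ys" "set ys = CONT v" using finite_distinct_list[OF assms(1)] by blast
  have lys: "length ys = card (CONT v)" using ys distinct_card by fastforce
  have neX: "X l \<noteq> {}" if "l \<le> card (CONT v)" for l
  proof -
    have "take l ys \<in> X l" unfolding X_def using ys lys that
      by (auto simp: set_take_subset[THEN subsetD] dest: in_set_takeD)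
    then show ?thesis by blast
  qed
  have cpos: "card (CONT v) \<ge> 1" using assms by (simp add: Suc_leI card_gt_0_iff)
  have "set_pmf (ctx_pmf CONT v) = (\<Union>l\<in>{1..card (CONT v)}. X l)"
    unfolding ctx_pmf_def using cpos neX finX by (simp add: set_bind_pmf X_def[symmetric])
  then show ?thesis using finX by (auto simp: X_def)
qed

definition blk :: "(('v \<times> int) \<times> 'c list) \<Rightarrow> ('v, 'c) token list" where
  "blk = (\<lambda>((v, q), cv). map Ctx cv @ [Vert v, Eq, Val q])"

lemma process_blk: "process vs qs cs = [Vert (last vs), Eq, Qu] @ join_comma (map blk (zip (zip vs qs) cs))"
  unfolding process_def blk_def by simp

lemma proc_set: "s \<in> set_pmf (proc_pmf VALS CONT c V vs) \<longleftrightarrow>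
   (\<exists>qs cs. qs \<in> set_pmf (gen_vals VALS c V None vs) \<and>
      list_all2 (\<lambda>x v. x \<in> set_pmf (ctx_pmf CONT v)) cs vs \<and> s = process vs qs cs)"
  unfolding proc_pmf_def set_bind_pmf set_map_pmf set_seq_pmf list_all2_map2 by blast

lemma proc_fin:
  assumes VA: "\<forall>v\<in>Vall. finite (VALS v) \<and> VALS v \<noteq> {}"
    and CA: "\<forall>v\<in>Vall. finite (CONT v) \<and> CONT v \<noteq> {}"
    and "set vs \<subseteq> Vall"
  shows "finite (set_pmf (proc_pmf VALS CONT c V vs))"
proof -
  have "\<forall>p\<in>set (map (ctx_pmf CONT) vs). finite (set_pmf p)"
  proof
    fix p assume "p \<in> set (map (ctx_pmf CONT) vs)"
    then obtain v where v: "v \<in> set vs" "p = ctx_pmf CONT v" by auto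
    then have "v \<in> Vall" using assms(3) by blast
    then show "finite (set_pmf p)" using v CA ctx_pmf_set[of CONT v] by blast
  qed
  then have F: "finite (set_pmf (seq_pmf (map (ctx_pmf CONT) vs)))" by (rule finite_seq_pmf)
  have G: "finite (set_pmf (gen_vals VALS c V None vs))" by (rule gen_vals_fin[OF VA assms(3)])
  have "set_pmf (proc_pmf VALS CONT c V vs) =
     (\<Union>qs\<in>set_pmf (gen_vals VALS c V None vs). process vs qs ` set_pmf (seq_pmf (map (ctx_pmf CONT) vs)))"
    unfolding proc_pmf_def set_bind_pmf set_map_pmf ..
  then show ?thesis using F G by simp
qed

lemma data_set: "x \<in> set_pmf (data_pmf VALS CONT c V D k) \<longleftrightarrow>
  (\<exists>vs\<in>set_pmf D. \<exists>ss. length ss = Suc k \<and> (\<forall>s\<in>set ss. s \<in> set_pmf (proc_pmf VALS CONT c V vs)) \<and>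
     x = mk_kshot (take k ss) (ss ! k))"
proof -
  have "set_pmf (data_pmf VALS CONT c V D k) = (\<Union>vs\<in>set_pmf D. (\<lambda>ss. mk_kshot (take k ss) (ss!k)) `
     {ss. length ss = Suc k \<and> (\<forall>s\<in>set ss. s \<in> set_pmf (proc_pmf VALS CONT c V vs))})"
    unfolding data_pmf_def kshot_pmf_def set_bind_pmf set_map_pmf set_seq_pmf list_all2_replicate2 ..
  then show ?thesis by (simp only: UN_iff image_iff mem_Collect_eq) blast
qed

lemma data_fin:
  assumes VA: "\<forall>v\<in>Vall. finite (VALS v) \<and> VALS v \<noteq> {}"
    and CA: "\<forall>v\<in>Vall. finite (CONT v) \<and> CONT v \<noteq> {}"
    and "finite (set_pmf D)" and "\<forall>vs\<in>set_pmf D. set vs \<subseteq> Vall"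
  shows "finite (set_pmf (data_pmf VALS CONT c V D k))"
proof -
  have K: "finite (set_pmf (kshot_pmf VALS CONT c V k vs))" if "vs \<in> set_pmf D" for vs
  proof -
    have P: "finite (set_pmf (proc_pmf VALS CONT c V vs))"
      using proc_fin[OF VA CA] assms(4) that by blast
    have "finite (set_pmf (seq_pmf (replicate (Suc k) (proc_pmf VALS CONT c V vs))))"
      by (rule finite_seq_pmf) (simp add: P)
    then show ?thesis unfolding kshot_pmf_def set_map_pmf by blast
  qed
  have "set_pmf (data_pmf VALS CONT c V D k) = (\<Union>vs\<in>set_pmf D. set_pmf (kshot_pmf VALS CONT c V k vs))"
    unfolding data_pmf_def set_bind_pmf ..
  then show ?thesis using K assms(3) by simp
qed



lemma dec_Ctx: "dec (map Ctx cv @ r) = dec r"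
  by (induction cv) auto

lemma dec_blk_Comma: "dec (blk x @ Comma # r) = fst x # dec r"
  by (cases x) (auto simp: blk_def dec_Ctx)

lemma dec_blk: "dec (blk x) = [fst x]"
  by (cases x) (auto simp: blk_def dec_Ctx)

lemma jc_Cons: "bs \<noteq> [] \<Longrightarrow> join_comma (b # bs) = b @ Comma # join_comma bs"
  by (cases bs) auto

lemma dec_jc: "dec (join_comma (map blk xs)) = map fst xs"
proof (induction xs)
  case Nil then show ?case by simp
next
  case (Cons x xs)
  show ?case
  proof (cases "xs = []")
    case True then show ?thesis by (simp add: dec_blk)
  next
    case False then show ?thesis using Cons by (simp add: jc_Cons dec_blk_Comma)
  qed
qed

lemma dec_process: "dec (process vs qs cs) = map fst (zip (zip vs qs) cs)"
  unfolding process_blk by (simp add: dec_jc)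

lemma map_fst_zip3: "length qs = length vs \<Longrightarrow> length cs = length vs \<Longrightarrow>
   map fst (map fst (zip (zip vs qs) cs)) = vs"
  by (simp add: map_fst_zip)

lemma set_jc: "set (join_comma bs) \<subseteq> insert Comma (\<Union>(set ` set bs))"
  by (induction bs rule: join_comma.induct) auto

lemma set_blk: "set (blk ((v, q), cv)) = Ctx ` set cv \<union> {Vert v, Eq, Val q}"
  by (auto simp: blk_def)

lemma Dlm_blk: "Dlm \<notin> set (blk x)" by (cases x) (auto simp: blk_def)
lemma Comma_blk: "Comma \<notin> set (blk x)" by (cases x) (auto simp: blk_def)

lemma Dlm_process: "Dlm \<notin> set (process vs qs cs)"
  unfolding process_blk using set_jc[of "map blk (zip (zip vs qs) cs)"] Dlm_blk by fastforce

lemma inA_Vert: "v \<in> Vall \<Longrightarrow> Vert v \<in> alphabet Vall VALS CONT"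
  by (simp add: alphabet_def)
lemma inA_Val: "v \<in> Vall \<Longrightarrow> q \<in> VALS v \<Longrightarrow> Val q \<in> alphabet Vall VALS CONT"
  unfolding alphabet_def by (intro UnI1 UnI2 imageI UN_I)
lemma inA_Ctx: "v \<in> Vall \<Longrightarrow> x \<in> CONT v \<Longrightarrow> Ctx x \<in> alphabet Vall VALS CONT"
  unfolding alphabet_def by (intro UnI1 UnI2 imageI UN_I)
lemma inA_spec: "Eq \<in> alphabet Vall VALS CONT" "Comma \<in> alphabet Vall VALS CONT"
  "Qu \<in> alphabet Vall VALS CONT" "Dlm \<in> alphabet Vall VALS CONT"
  by (simp_all add: alphabet_def)

lemma process_in_A:
  assumes "vs \<noteq> []" "set vs \<subseteq> Vall" "list_all2 (\<lambda>q v. q \<in> VALS v) qs vs"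
    "list_all2 (\<lambda>cv v. set cv \<subseteq> CONT v) cs vs"
  shows "set (process vs qs cs) \<subseteq> alphabet Vall VALS CONT"
proof -
  have B: "set (blk x) \<subseteq> alphabet Vall VALS CONT" if xin: "x \<in> set (zip (zip vs qs) cs)" for x
  proof -
    obtain i where i: "i < length (zip (zip vs qs) cs)" "zip (zip vs qs) cs ! i = x"
      using in_set_conv_nth[THEN iffD1, OF xin] by blast
    have li: "i < length vs" "i < length qs" "i < length cs" using i by auto
    have x: "x = ((vs!i, qs!i), cs!i)" using i(2)[symmetric] li by simp
    have V: "vs!i \<in> Vall" using li assms(2) by auto
    have Q: "qs!i \<in> VALS (vs!i)" using assms(3) li(2) by (simp add: list_all2_conv_all_nth)
    have C: "set (cs!i) \<subseteq> CONT (vs!i)" using assms(4) li(3) by (simp add: list_all2_conv_all_nth)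
    have 1: "Ctx ` set (cs!i) \<subseteq> alphabet Vall VALS CONT" using C by (auto intro!: inA_Ctx[OF V])
    have 2: "{Vert (vs!i), Eq, Val (qs!i)} \<subseteq> alphabet Vall VALS CONT"
      using inA_Vert[OF V, of VALS CONT] inA_Val[where VALS=VALS and CONT=CONT, OF V Q] inA_spec(1)[of Vall VALS CONT] by simp
    show ?thesis unfolding x set_blk using 1 2 by (rule Un_least)
  qed
  have L: "last vs \<in> Vall" using assms(1,2) by auto
  have J: "set (join_comma (map blk (zip (zip vs qs) cs))) \<subseteq> alphabet Vall VALS CONT"
  proof -
    have "insert Comma (\<Union>(set ` set (map blk (zip (zip vs qs) cs)))) \<subseteq> alphabet Vall VALS CONT"
      using B inA_spec(2)[of Vall VALS CONT] by auto
    then show ?thesis using set_jc by blast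
  qed
  show ?thesis unfolding process_blk using J inA_Vert[OF L, of VALS CONT] inA_spec[of Vall VALS CONT] by simp
qed

lemma set_tl_sub: "x \<in> set (tl ys) \<Longrightarrow> x \<in> set ys"
  by (cases ys) auto

lemma takeWhile_ne: "a \<notin> set xs \<Longrightarrow> takeWhile (\<lambda>x. x \<noteq> a) (xs @ a # ys) = xs"
  by (induction xs) auto

lemma dropWhile_ne: "a \<notin> set xs \<Longrightarrow> dropWhile (\<lambda>x. x \<noteq> a) (xs @ a # ys) = a # ys"
  by (induction xs) auto

lemma split_lab_subset: "set (snd (split_comma s)) \<subseteq> set s"
  by (auto simp: split_comma_def dest!: set_tl_sub set_dropWhileD)

lemma split_ge2:
  "split_comma ([Vert w, Eq, Qu] @ join_comma (map blk (x1 # x2 # xr))) =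
     ([Vert w, Eq, Qu] @ blk x1 @ [Comma], join_comma (map blk (x2 # xr)))"
proof -
  have e: "[Vert w, Eq, Qu] @ join_comma (map blk (x1 # x2 # xr)) =
     ([Vert w, Eq, Qu] @ blk x1) @ Comma # join_comma (map blk (x2 # xr))" by simp
  have C': "Comma \<notin> set ([Vert w, Eq, Qu] @ blk x1)" using Comma_blk[of x1] by simp
  show ?thesis unfolding split_comma_def e using takeWhile_ne[OF C'] dropWhile_ne[OF C'] by simp
qed

lemma split_1:
  "split_comma ([Vert w, Eq, Qu] @ join_comma (map blk [x1])) = ([Vert w, Eq, Qu] @ blk x1, [])"
proof -
  have "Comma \<notin> set ([Vert w, Eq, Qu] @ blk x1)" using Comma_blk[of x1] by simp
  then show ?thesis unfolding split_comma_def by simp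
qed

lemma cur_seq_app: "Dlm \<notin> set w \<Longrightarrow> cur_seq (X @ Dlm # w) = w"
proof -
  assume "Dlm \<notin> set w"
  then have "takeWhile (\<lambda>x. x \<noteq> Dlm) (rev w @ Dlm # rev X) = rev w"
    by (intro takeWhile_ne) simp
  then show ?thesis unfolding cur_seq_def by simp
qed

lemma concat_Dlm: "shots \<noteq> [] \<Longrightarrow> \<exists>X. concat (map (\<lambda>x. x @ [Dlm]) shots) = X @ [Dlm]"
proof (induction shots)
  case Nil then show ?case by simp
next
  case (Cons a shots)
  show ?case
  proof (cases "shots = []")
    case True then show ?thesis by simp
  next
    case False
    then obtain X where "concat (map (\<lambda>x. x @ [Dlm]) shots) = X @ [Dlm]" using Cons by blast
    then show ?thesis by (intro exI[of _ "a @ Dlm # X"]) simp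
  qed
qed

lemma first_shot:
  assumes "0 < k" "length ss = Suc k" "Dlm \<notin> set (ss ! 0)"
  shows "takeWhile (\<lambda>x. x \<noteq> Dlm) (concat (map (\<lambda>x. x @ [Dlm]) (take k ss)) @ w) = ss ! 0"
proof -
  obtain s0 st where ss: "ss = s0 # st" using assms(2) by (cases ss) auto
  obtain k' where k: "k = Suc k'" using assms(1) by (cases k) auto
  have "take k ss = s0 # take k' st" using ss k by simp
  then show ?thesis using assms(3) ss takeWhile_ne[of Dlm s0] by simp
qed

definition render :: "('v \<times> int) list \<Rightarrow> ('v, 'c) token list" where
  "render ps = join_comma (map blk (map (\<lambda>p. (p, [])) ps))"

lemma dec_render: "dec (render ps) = ps"
  unfolding render_def dec_jc by (induction ps) auto

lemma render_Cons2: "ps \<noteq> [] \<Longrightarrow> render ((v, q) # ps) = [Vert v, Eq, Val q, Comma] @ render ps"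
  unfolding render_def by (cases ps) (auto simp: blk_def)

lemma render_1: "render [(v, q)] = [Vert v, Eq, Val q]"
  unfolding render_def by (simp add: blk_def)

lemma render_len: "ps \<noteq> [] \<Longrightarrow> length (render ps) = 4 * length ps - 1"
proof (induction ps)
  case Nil then show ?case by simp
next
  case (Cons p ps)
  obtain v q where p: "p = (v, q)" by (cases p)
  show ?case
  proof (cases "ps = []")
    case True then show ?thesis using p by (simp add: render_1)
  next
    case False then show ?thesis using p Cons by (simp add: render_Cons2)
  qed
qed

lemma render_nth:
  fixes ps :: "('v \<times> int) list"
  shows "p < length (render ps :: ('v, 'c) token list) \<Longrightarrow> (render ps :: ('v, 'c) token list) ! p =
   (if p mod 4 = 0 then Vert (fst (ps ! (p div 4))) else if p mod 4 = 1 then Eq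
    else if p mod 4 = 2 then Val (snd (ps ! (p div 4))) else Comma)"
proof (induction ps arbitrary: p)
  case Nil then show ?case by (simp add: render_def)
next
  case (Cons a ps)
  obtain v q where a: "a = (v, q)" by (cases a)
  show ?case
  proof (cases "ps = []")
    case True
    then have "p < 3" using Cons.prems a by (simp add: render_1)
    then show ?thesis using True a by (auto simp: render_1 less_Suc_eq)
  next
    case False
    note R = render_Cons2[OF False, of v q]
    show ?thesis
    proof (cases "p < 4")
      case True then show ?thesis unfolding a R by (auto simp: less_Suc_eq nth_append)
    next
      case ge: False
      have "p < 4 + length (render ps :: ('v, 'c) token list)" using Cons.prems unfolding a R by (simp add: eval_nat_numeral)
      then have pl: "p - 4 < length (render ps :: ('v, 'c) token list)" using ge by linarith
      have m: "(p - 4) mod 4 = p mod 4" using ge by (simp add: mod_if)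
      have d: "p div 4 = Suc ((p - 4) div 4)" using ge by (simp add: div_if)
      have "(render ((v, q) # ps) :: ('v, 'c) token list) ! p = (render ps :: ('v, 'c) token list) ! (p - 4)" unfolding R using ge by (simp add: nth_append eval_nat_numeral)
      also have "\<dots> = (if p mod 4 = 0 then Vert (fst (ps ! ((p-4) div 4))) else if p mod 4 = 1 then Eq
    else if p mod 4 = 2 then Val (snd (ps ! ((p-4) div 4))) else Comma)" using Cons.IH[OF pl] m by simp
      finally show ?thesis unfolding a d by simp
    qed
  qed
qed

lemma render_last:
  fixes ps :: "('v \<times> int) list"
  shows "ps \<noteq> [] \<Longrightarrow> \<exists>pre :: ('v, 'c) token list. render ps = pre @ [Vert (fst (last ps)), Eq, Val (snd (last ps))]"
proof (induction ps)
  case Nil then show ?case by simp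
next
  case (Cons p ps)
  obtain v q where p: "p = (v, q)" by (cases p)
  show ?case
  proof (cases "ps = []")
    case True then show ?thesis using p by (simp add: render_1)
  next
    case False
    then obtain pre :: "('v, 'c) token list" where "render ps = pre @ [Vert (fst (last ps)), Eq, Val (snd (last ps))]" using Cons.IH[OF False] by blast
    then show ?thesis using False p by (simp add: render_Cons2)
  qed
qed

fun valof :: "('v, 'c) token \<Rightarrow> int" where
  "valof (Val q) = q"
| "valof _ = 0"

definition getinp :: "('v, 'c) token list \<Rightarrow> ('v, 'c) token list" where
  "getinp z = take (length z - length (cur_seq z) + length (takeWhile (\<lambda>x. x \<noteq> Comma) (cur_seq z)) + 1) z"

definition Fout :: "('v \<times> 'v \<Rightarrow> int) \<Rightarrow> ('v, 'c) token list \<Rightarrow> ('v, 'c) token list" where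
  "Fout c inp = (let vs = map fst (dec (takeWhile (\<lambda>x. x \<noteq> Dlm) inp));
                    q1 = valof (inp ! (length inp - 2))
                 in render (zip (tl vs) (gvl c (hd vs) q1 (tl vs))))"

definition nxt :: "('v \<times> 'v \<Rightarrow> int) \<Rightarrow> ('v, 'c) token list \<Rightarrow> ('v, 'c) token" where
  "nxt c z = Fout c (getinp z) ! (length z - length (getinp z))"

lemma getinp_app:
  assumes "Dlm \<notin> set P0" "Comma \<notin> set P0" "Dlm \<notin> set w"
  shows "getinp (X @ Dlm # P0 @ Comma # w) = X @ Dlm # P0 @ [Comma]"
proof -
  have cs: "cur_seq (X @ Dlm # P0 @ Comma # w) = P0 @ Comma # w"
    using assms by (intro cur_seq_app) auto
  have tw: "takeWhile (\<lambda>x. x \<noteq> Comma) (P0 @ Comma # w) = P0"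
    using assms(2) by (rule takeWhile_ne)
  show ?thesis unfolding getinp_def cs tw by simp
qed



lemma finite_alphabet:
  assumes "finite Vall" "\<forall>v\<in>Vall. finite (VALS v)" "\<forall>v\<in>Vall. finite (CONT v)"
  shows "finite (alphabet Vall VALS CONT)"
  unfolding alphabet_def using assms by auto

lemma Pmodel_pos_le1:
  assumes "finite A" "a \<in> A"
  shows "0 < Pmodel A \<theta> zs a" "Pmodel A \<theta> zs a \<le> 1"
proof -
  have Z: "0 < (\<Sum>b\<in>A. exp (logit \<theta> zs b))" using assms by (intro sum_pos) auto
  have "exp (logit \<theta> zs a) \<le> (\<Sum>b\<in>A. exp (logit \<theta> zs b))"
    using assms by (intro member_le_sum) auto
  then show "Pmodel A \<theta> zs a \<le> 1" using Z unfolding Pmodel_def by simp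
  show "0 < Pmodel A \<theta> zs a" using Z unfolding Pmodel_def by simp
qed

lemma seq_loss_nonneg:
  assumes "finite A" "set lab \<subseteq> A"
  shows "seq_loss A \<theta> inp lab \<ge> 0"
  unfolding seq_loss_def
proof (intro sum_nonneg)
  fix t assume "t \<in> {1..<length lab}"
  then have "lab ! t \<in> A" using assms(2) by auto
  then have "0 < Pmodel A \<theta> (inp @ take t lab) (lab ! t)" "Pmodel A \<theta> (inp @ take t lab) (lab ! t) \<le> 1"
    using Pmodel_pos_le1[OF assms(1)] by auto
  then show "0 \<le> - ln (Pmodel A \<theta> (inp @ take t lab) (lab ! t))" by simp
qed

lemma Pmodel_cong: "logit \<theta> zs = logit \<theta>' zs \<Longrightarrow> Pmodel A \<theta> zs = Pmodel A \<theta>' zs"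
  unfolding Pmodel_def by (intro ext) simp

lemma seq_loss_cong:
  assumes "\<And>t. t \<in> {1..<length lab} \<Longrightarrow> logit \<theta> (inp @ take t lab) = logit \<theta>' (inp @ take t lab)"
  shows "seq_loss A \<theta> inp lab = seq_loss A \<theta>' inp lab"
  unfolding seq_loss_def by (intro sum.cong refl) (simp add: Pmodel_cong[OF assms])

lemma Pmodel_ind:
  assumes "finite A" "a \<in> A" "b \<in> A" "b \<noteq> a"
    and "\<And>x. logit \<theta> zs x = (if x = a then 1 else 0)"
  shows "Pmodel A \<theta> zs b < Pmodel A \<theta> zs a"
proof -
  have Z: "0 < (\<Sum>b\<in>A. exp (logit \<theta> zs b))" using assms by (intro sum_pos) auto
  have "exp (logit \<theta> zs b) < exp (logit \<theta> zs a)" using assms(4,5) by simp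
  then show ?thesis unfolding Pmodel_def using Z by (simp add: divide_strict_right_mono)
qed

lemma greedy_unique:
  assumes finA: "finite A"
    and arg: "\<forall>i<length out. out ! i \<in> A \<and>
        (\<forall>b\<in>A. b \<noteq> out ! i \<longrightarrow> Pmodel A \<theta> (z @ take i out) b < Pmodel A \<theta> (z @ take i out) (out ! i))"
    and st: "stops z out" and nst: "\<forall>i<length out. \<not> stops z (take i out)"
  shows "greedy_run A \<theta> z out" "greedy_run A \<theta> z out' \<Longrightarrow> out' = out"
proof -
  have argA: "\<And>i. i < length out \<Longrightarrow> out ! i \<in> A" using arg by simp
  have argS: "\<And>i b. i < length out \<Longrightarrow> b \<in> A \<Longrightarrow> b \<noteq> out ! i \<Longrightarrow>
      Pmodel A \<theta> (z @ take i out) b < Pmodel A \<theta> (z @ take i out) (out ! i)" using arg by simp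
  have "is_argmax A (Pmodel A \<theta> (z @ take i out)) (out ! i)" if i: "i < length out" for i
    unfolding is_argmax_def
  proof (intro conjI ballI)
    show "out ! i \<in> A" using argA i .
    fix b assume b: "b \<in> A"
    show "Pmodel A \<theta> (z @ take i out) b \<le> Pmodel A \<theta> (z @ take i out) (out ! i)"
    proof (cases "b = out ! i")
      case True then show ?thesis by simp
    next
      case False show ?thesis using argS[OF i b False] by (rule less_imp_le)
    qed
  qed
  then show G: "greedy_run A \<theta> z out" unfolding greedy_run_def using st nst by simp
  assume G': "greedy_run A \<theta> z out'"
  have pre: "take i out' = take i out" if "i \<le> length out" "i \<le> length out'" for i
    using that
  proof (induction i)
    case 0 then show ?case by simp
  next
    case (Suc i)
    have IH: "take i out' = take i out" using Suc by simp
    have i': "i < length out'" using Suc.prems by simp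
    have "is_argmax A (Pmodel A \<theta> (z @ take i out')) (out' ! i)"
      using G' i' unfolding greedy_run_def by simp
    then have am: "is_argmax A (Pmodel A \<theta> (z @ take i out)) (out' ! i)" unfolding IH .
    have eq: "out' ! i = out ! i"
    proof (rule ccontr)
      assume ne: "out' ! i \<noteq> out ! i"
      have i: "i < length out" using Suc.prems by simp
      have oA: "out' ! i \<in> A" using am unfolding is_argmax_def by simp
      have 1: "Pmodel A \<theta> (z @ take i out) (out' ! i) < Pmodel A \<theta> (z @ take i out) (out ! i)"
        using argS[OF i oA ne] .
      have 2: "Pmodel A \<theta> (z @ take i out) (out ! i) \<le> Pmodel A \<theta> (z @ take i out) (out' ! i)"
        using am argA[OF i] unfolding is_argmax_def by simp
      from 1 2
      show False by simp
    qed
    show ?case using IH eq Suc.prems by (simp add: take_Suc_conv_app_nth)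
  qed
  show "out' = out"
  proof (cases "length out' < length out")
    case True
    have "take (length out') out' = take (length out') out" using True by (intro pre) auto
    then have "take (length out') out = out'" by (metis take_all order_refl)
    moreover have "stops z out'" using G' unfolding greedy_run_def by simp
    moreover have "\<not> stops z (take (length out') out)" using nst True by simp
    ultimately show ?thesis by simp
  next
    case False
    have "take (length out) out' = take (length out) out" using False by (intro pre) auto
    then have tk: "take (length out) out' = out" by simp
    show ?thesis
    proof (cases "length out < length out'")
      case True
      then have "\<not> stops z (take (length out) out')" using G' unfolding greedy_run_def by simp
      then show ?thesis using tk st by simp
    next
      case False
      then have "length out' = length out" using \<open>\<not> length out' < length out\<close> by linarith
      then show ?thesis using tk by (metis take_all order_refl)
    qed
  qed
qed

lemma test_distinct_last:
  assumes fin: "finite (chains V E)" and tl: "test_list V E vs" and j: "j < length vs - 1"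
  shows "vs ! j \<noteq> last vs"
proof
  assume eq: "vs ! j = last vs"
  let ?N = "length vs"
  have ch: "is_chain V E vs" and len: "?N = maxlen V E" using tl unfolding test_list_def by auto
  have ne: "vs \<noteq> []" and sub: "set vs \<subseteq> V"
    and E: "\<And>i. Suc i < ?N \<Longrightarrow> (vs ! i, vs ! Suc i) \<in> E" using ch unfolding is_chain_def by auto
  define ws where "ws = vs @ drop (Suc j) vs"
  have lws: "length ws = ?N + (?N - Suc j)" unfolding ws_def by simp
  have lastv: "last vs = vs ! (?N - 1)" using ne by (simp add: last_conv_nth)
  have "is_chain V E ws" unfolding is_chain_def
  proof (intro conjI allI impI)
    show "ws \<noteq> []" using ne unfolding ws_def by simp
    show "set ws \<subseteq> V" using sub unfolding ws_def by (auto dest: in_set_dropD)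
    fix i assume i: "Suc i < length ws"
    show "(ws ! i, ws ! Suc i) \<in> E"
    proof (cases "Suc i < ?N")
      case True then show ?thesis unfolding ws_def using E by (simp add: nth_append)
    next
      case False
      show ?thesis
      proof (cases "i = ?N - 1")
        case True
        have "ws ! i = vs ! j" unfolding ws_def using True ne eq lastv by (simp add: nth_append)
        moreover have "ws ! Suc i = vs ! Suc j" unfolding ws_def using True ne j
          by (simp add: nth_append)
        ultimately show ?thesis using E j by simp
      next
        case False
        then have iN: "i \<ge> ?N" using \<open>\<not> Suc i < ?N\<close> by simp
        have "ws ! i = vs ! (Suc j + (i - ?N))" unfolding ws_def using iN j by (simp add: nth_append)
        moreover have "ws ! Suc i = vs ! Suc (Suc j + (i - ?N))" unfolding ws_def using iN j
          by (simp add: nth_append Suc_diff_le)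
        moreover have "Suc (Suc j + (i - ?N)) < ?N" using i lws iN by simp
        ultimately show ?thesis using E by simp
      qed
    qed
  qed
  then have "length ws \<le> maxlen V E" unfolding maxlen_def chains_def using fin
    by (intro Max_ge) (auto simp: chains_def)
  then show False using lws len j by simp
qed

lemma last_zip_eq: "length xs = length ys \<Longrightarrow> xs \<noteq> [] \<Longrightarrow> last (zip xs ys) = (last xs, last ys)"
  by (induction xs ys rule: list_induct2) auto

lemma gvl_len: "length (gvl c u q vs) = length vs"
  by (induction vs arbitrary: u q) auto

lemma render_in_A:
  assumes "\<forall>(v, q)\<in>set ps. v \<in> Vall \<and> q \<in> VALS v"
  shows "set (render ps) \<subseteq> alphabet Vall VALS CONT"
proof -
  have "set (blk x) \<subseteq> alphabet Vall VALS CONT" if xin: "x \<in> set (map (\<lambda>p. (p, [])) ps)" for x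
  proof -
    obtain v q where x: "x = ((v, q), [])" and vq: "(v, q) \<in> set ps" using xin by auto
    have "v \<in> Vall" "q \<in> VALS v" using assms vq by auto
    then show ?thesis unfolding x set_blk
      using inA_Vert[of v Vall VALS CONT] inA_Val[where VALS=VALS and CONT=CONT] inA_spec(1)[of Vall VALS CONT] by simp
  qed
  then have "insert Comma (\<Union>(set ` set (map blk (map (\<lambda>p. (p, [])) ps)))) \<subseteq> alphabet Vall VALS CONT"
    using inA_spec(2)[of Vall VALS CONT] by auto
  then show ?thesis unfolding render_def using set_jc by blast
qed

lemma Dlm_render: "Dlm \<notin> set (render ps)"
  unfolding render_def using set_jc[of "map blk (map (\<lambda>p. (p, [])) ps)"] Dlm_blk by fastforce



lemma sample_basic:
  assumes k: "0 < k" and len: "length ss = Suc k"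
    and P: "\<forall>s\<in>set ss. s \<in> set_pmf (proc_pmf VALS CONT c V vs)"
  shows "map fst (dec (takeWhile (\<lambda>x. x \<noteq> Dlm) (fst (mk_kshot (take k ss) (ss ! k)) @ w))) = vs"
    and "fst (mk_kshot (take k ss) (ss ! k)) \<noteq> []"
proof -
  have "ss ! 0 \<in> set ss" using len by simp
  then obtain qs cs where qs: "qs \<in> set_pmf (gen_vals VALS c V None vs)"
    and cs: "list_all2 (\<lambda>x v. x \<in> set_pmf (ctx_pmf CONT v)) cs vs" and s0: "ss ! 0 = process vs qs cs"
    using P proc_set by blast
  have D: "Dlm \<notin> set (ss ! 0)" unfolding s0 by (rule Dlm_process)
  have e: "fst (mk_kshot (take k ss) (ss ! k)) @ w =
      concat (map (\<lambda>x. x @ [Dlm]) (take k ss)) @ (fst (split_comma (ss ! k)) @ w)"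
    unfolding mk_kshot_def by simp
  have "takeWhile (\<lambda>x. x \<noteq> Dlm) (fst (mk_kshot (take k ss) (ss ! k)) @ w) = ss ! 0"
    unfolding e by (rule first_shot[OF k len D])
  moreover have "length qs = length vs" using gen_vals_len[OF qs] .
  moreover have "length cs = length vs" using cs by (rule list_all2_lengthD)
  ultimately show "map fst (dec (takeWhile (\<lambda>x. x \<noteq> Dlm) (fst (mk_kshot (take k ss) (ss ! k)) @ w))) = vs"
    unfolding s0 by (simp add: dec_process map_fst_zip3)
  have "take k ss \<noteq> []" using k len by (cases ss) auto
  then obtain X where "concat (map (\<lambda>x. x @ [Dlm]) (take k ss)) = X @ [Dlm]" using concat_Dlm by blast
  then show "fst (mk_kshot (take k ss) (ss ! k)) \<noteq> []" unfolding mk_kshot_def by simp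
qed

lemma valid_unpack:
  assumes "valid_structure Vall V E VALS CONT c"
  shows "finite Vall" "V \<subseteq> Vall" "\<forall>v\<in>Vall. finite (VALS v) \<and> VALS v \<noteq> {}"
    "\<forall>v\<in>Vall. finite (CONT v) \<and> CONT v \<noteq> {}"
    "\<forall>e\<in>E. \<forall>q\<in>VALS (fst e). q + c e \<in> VALS (snd e)" "finite (chains V E)"
  using assms unfolding valid_structure_def by auto

lemma finite_alph: "valid_structure Vall V E VALS CONT c \<Longrightarrow> finite (alphabet Vall VALS CONT)"
  using valid_unpack[of Vall V E VALS CONT c] by (intro finite_alphabet) auto

lemma is_chain_chainE: "is_chain V E vs \<Longrightarrow> chainE E vs"
  unfolding is_chain_def chainE_def by blast

lemma sample_process_props:
  assumes vst: "valid_structure Vall V E VALS CONT c"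
    and sub: "set vs \<subseteq> Vall" and ch: "chainE E (filter (\<lambda>v. v \<in> V) vs)"
    and s: "s \<in> set_pmf (proc_pmf VALS CONT c V vs)"
  obtains qs cs where "s = process vs qs cs" "qs \<in> set_pmf (gen_vals VALS c V None vs)"
    "list_all2 (\<lambda>q v. q \<in> VALS v) qs vs" "list_all2 (\<lambda>cv v. set cv \<subseteq> CONT v) cs vs"
    "length qs = length vs" "length cs = length vs"
proof -
  note U = valid_unpack[OF vst]
  obtain qs cs where qs: "qs \<in> set_pmf (gen_vals VALS c V None vs)"
    and cs: "list_all2 (\<lambda>x v. x \<in> set_pmf (ctx_pmf CONT v)) cs vs" and s0: "s = process vs qs cs"
    using s proc_set by blast
  have QV: "list_all2 (\<lambda>q v. q \<in> VALS v) qs vs"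
    using gen_vals_vals[OF U(3) U(5) sub ch _ qs] by simp
  have CV: "list_all2 (\<lambda>cv v. set cv \<subseteq> CONT v) cs vs"
    unfolding list_all2_conv_all_nth
  proof (intro conjI allI impI)
    show "length cs = length vs" using cs by (rule list_all2_lengthD)
    fix i assume i: "i < length cs"
    have "cs ! i \<in> set_pmf (ctx_pmf CONT (vs ! i))" using cs i by (simp add: list_all2_conv_all_nth)
    moreover have "vs ! i \<in> Vall" using sub i \<open>length cs = length vs\<close> by auto
    ultimately show "set (cs ! i) \<subseteq> CONT (vs ! i)" using ctx_pmf_set[of CONT "vs ! i"] U(4) by blast
  qed
  show ?thesis using that[OF s0 qs QV CV] gen_vals_len[OF qs] list_all2_lengthD[OF cs] by blast
qed

lemma sample_lab_in_A:
  assumes vst: "valid_structure Vall V E VALS CONT c"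
    and sub: "set vs \<subseteq> Vall" and ne: "vs \<noteq> []" and ch: "chainE E (filter (\<lambda>v. v \<in> V) vs)"
    and len: "length ss = Suc k" and P: "\<forall>s\<in>set ss. s \<in> set_pmf (proc_pmf VALS CONT c V vs)"
  shows "set (snd (mk_kshot (take k ss) (ss ! k))) \<subseteq> alphabet Vall VALS CONT"
proof -
  have "ss ! k \<in> set ss" using len by simp
  then have s: "ss ! k \<in> set_pmf (proc_pmf VALS CONT c V vs)" using P by blast
  obtain qs cs where "ss ! k = process vs qs cs" "list_all2 (\<lambda>q v. q \<in> VALS v) qs vs"
    "list_all2 (\<lambda>cv v. set cv \<subseteq> CONT v) cs vs"
    using sample_process_props[OF vst sub ch s] by metis
  then have "set (ss ! k) \<subseteq> alphabet Vall VALS CONT" using process_in_A[OF ne sub] by simp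
  then show ?thesis unfolding mk_kshot_def using split_lab_subset by fastforce
qed

lemma nth_last3: "Z = pre @ [a, b, c] \<Longrightarrow> Z ! (length Z - 1) = c \<and> Z ! (length Z - 3) = a"
  by (simp add: nth_append)

lemma test_sample:
  assumes vst: "valid_structure Vall V E VALS CONT c"
    and tl: "test_list V E vs" and k: "0 < k" and len: "length ss = Suc k"
    and P: "\<forall>s\<in>set ss. s \<in> set_pmf (proc_pmf VALS CONT c V vs)"
    and inp: "inp = fst (mk_kshot (take k ss) (ss ! k))" and lab: "lab = snd (mk_kshot (take k ss) (ss ! k))"
    and H: "\<forall>i < length (Fout c inp). \<forall>a. logit \<theta> (inp @ take i (Fout c inp)) a =
              (if a = nxt c (inp @ take i (Fout c inp)) then 1 else 0)"
  shows "test_correct (alphabet Vall VALS CONT) \<theta> inp lab"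
proof -
  note U = valid_unpack[OF vst]
  let ?A = "alphabet Vall VALS CONT"
  have finA: "finite ?A" by (rule finite_alph[OF vst])
  have ch: "is_chain V E vs" and lvs: "length vs = maxlen V E" using tl unfolding test_list_def by auto
  have ne: "vs \<noteq> []" and subV: "set vs \<subseteq> V" using ch unfolding is_chain_def by auto
  have sub: "set vs \<subseteq> Vall" using subV U(2) by blast
  have fl: "filter (\<lambda>v. v \<in> V) vs = vs" using subV by (simp add: subset_iff)
  have chE: "chainE E (filter (\<lambda>v. v \<in> V) vs)" unfolding fl by (rule is_chain_chainE[OF ch])
  have "ss ! k \<in> set ss" using len by simp
  then have sk: "ss ! k \<in> set_pmf (proc_pmf VALS CONT c V vs)" using P by blast
  obtain qs cs where skp: "ss ! k = process vs qs cs" and qsg: "qs \<in> set_pmf (gen_vals VALS c V None vs)"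
    and QV: "list_all2 (\<lambda>q v. q \<in> VALS v) qs vs" and lqs: "length qs = length vs" and lcs: "length cs = length vs"
    using sample_process_props[OF vst sub chE sk] by metis
  obtain v1 vr where vs: "vs = v1 # vr" using ne by (cases vs) auto
  obtain q1 where qs: "qs = q1 # gvl c v1 q1 vr" using gen_vals_test[of v1 vr V qs VALS c] qsg subV vs by blast
  obtain c1 cr where cs: "cs = c1 # cr" using lcs vs by (cases cs) auto
  define G where "G = gvl c v1 q1 vr"
  have lG: "length G = length vr" unfolding G_def by (rule gvl_len)
  have lcr: "length cr = length vr" using lcs vs cs by simp
  have "take k ss \<noteq> []" using k len by (cases ss) auto
  then obtain X where X: "concat (map (\<lambda>x. x @ [Dlm]) (take k ss)) = X @ [Dlm]" using concat_Dlm by blast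
  have inp': "inp = X @ Dlm # fst (split_comma (ss ! k))" unfolding inp mk_kshot_def X by simp
  have lab': "lab = snd (split_comma (ss ! k))" unfolding lab mk_kshot_def by simp
  have zz: "zip (zip vs qs) cs = ((v1, q1), c1) # zip (zip vr G) cr" unfolding vs qs cs G_def by simp
  have skp': "ss ! k = [Vert (last vs), Eq, Qu] @ join_comma (map blk (((v1, q1), c1) # zip (zip vr G) cr))"
    unfolding skp process_blk zz ..
  have blk1: "blk ((v1, q1), c1) = map Ctx c1 @ [Vert v1, Eq, Val q1]" by (simp add: blk_def)
  show ?thesis
  proof (cases "vr = []")
    case True
    have zr: "zip (zip vr G) cr = []" using True by simp
    have lv: "last vs = v1" using True vs by simp
    have sp: "split_comma (ss ! k) = ([Vert v1, Eq, Qu] @ blk ((v1, q1), c1), [])"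
      unfolding skp' zr lv by (rule split_1)
    have inp1: "inp = X @ Dlm # ([Vert v1, Eq, Qu] @ blk ((v1, q1), c1))" unfolding inp' sp by simp
    have lab1: "lab = []" unfolding lab' sp by simp
    have cs1: "cur_seq inp = [Vert v1, Eq, Qu] @ blk ((v1, q1), c1)"
      unfolding inp1 using Dlm_blk[of "((v1, q1), c1)"] by (intro cur_seq_app) simp
    have st: "stops inp []" unfolding stops_def cs1
      by (rule exI[of _ "X @ Dlm # [Vert v1, Eq, Qu] @ map Ctx c1"], rule exI[of _ q1]) (simp add: inp1 blk1)
    have g0: "greedy_run ?A \<theta> inp []" unfolding greedy_run_def using st by simp
    have U0: "out = []" if "greedy_run ?A \<theta> inp out" for out
    proof (rule ccontr)
      assume "out \<noteq> []"
      then have "\<not> stops inp (take 0 out)" using that unfolding greedy_run_def by blast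
      then show False using st by simp
    qed
    show ?thesis unfolding test_correct_def using g0 lab1 by (auto dest: U0)
  next
    case False
    obtain x2 xr where zr: "zip (zip vr G) cr = x2 # xr" using False lG lcr
      by (cases "zip (zip vr G) cr") auto
    define P0 where "P0 = [Vert (last vs), Eq, Qu] @ blk ((v1, q1), c1)"
    have sp: "split_comma (ss ! k) = (P0 @ [Comma], join_comma (map blk (zip (zip vr G) cr)))"
      unfolding skp' zr P0_def by (simp only: split_ge2 append_assoc)
    have inp2: "inp = X @ Dlm # P0 @ [Comma]" unfolding inp' sp by simp
    have lab2: "lab = join_comma (map blk (zip (zip vr G) cr))" unfolding lab' sp by simp
    have DP0: "Dlm \<notin> set P0" unfolding P0_def using Dlm_blk[of "((v1, q1), c1)"] by simp
    have CP0: "Comma \<notin> set P0" unfolding P0_def using Comma_blk[of "((v1, q1), c1)"] by simp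
    define ps where "ps = zip vr G"
    define out :: "('a, 'b) token list" where "out = render ps"
    have psne: "ps \<noteq> []" unfolding ps_def using False lG by (cases vr; cases G) auto
    have lps: "length ps = length vr" unfolding ps_def using lG by simp
    have lout: "length out = 4 * length ps - 1" unfolding out_def using render_len[OF psne] .
    have tw: "map fst (dec (takeWhile (\<lambda>x. x \<noteq> Dlm) inp)) = vs"
      using sample_basic(1)[OF k len P, of "[]"] unfolding inp by simp
    have inpv: "inp = (X @ Dlm # [Vert (last vs), Eq, Qu] @ map Ctx c1 @ [Vert v1, Eq]) @ [Val q1, Comma]"
      unfolding inp2 P0_def blk1 by simp
    have vq1: "valof (inp ! (length inp - 2)) = q1"
      by (subst (1 2) inpv) (simp add: nth_append)
    have Fo: "Fout c inp = out"
      unfolding Fout_def Let_def tw vq1 out_def ps_def G_def vs by simp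
    have dec_eq: "dec out = dec lab"
    proof -
      have "dec lab = map fst (zip (zip vr G) cr)" unfolding lab2 by (rule dec_jc)
      also have "\<dots> = zip vr G" using lG lcr by (simp add: map_fst_zip)
      finally show ?thesis unfolding out_def dec_render ps_def by simp
    qed
    have QG: "list_all2 (\<lambda>q v. q \<in> VALS v) G vr" using QV unfolding qs vs G_def by simp
    have psA: "\<forall>(v, q)\<in>set ps. v \<in> Vall \<and> q \<in> VALS v"
    proof
      fix p assume "p \<in> set ps"
      then obtain i where i: "i < length ps" "ps ! i = p" by (auto simp: in_set_conv_nth)
      have "vr ! i \<in> Vall" using i lps sub vs by auto
      moreover have "G ! i \<in> VALS (vr ! i)" using QG i lps by (simp add: list_all2_conv_all_nth)
      ultimately show "case p of (v, q) \<Rightarrow> v \<in> Vall \<and> q \<in> VALS v"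
        using i lps lG unfolding ps_def by auto
    qed
    have outA: "set out \<subseteq> ?A" unfolding out_def by (rule render_in_A[OF psA])
    have nx: "nxt c (inp @ take i out) = out ! i" if i: "i < length out" for i
    proof -
      have Dt: "Dlm \<notin> set (take i out)" using Dlm_render[of ps] unfolding out_def by (auto dest: in_set_takeD)
      have ge: "getinp (inp @ take i out) = inp"
        unfolding inp2 using getinp_app[OF DP0 CP0 Dt, of X] by simp
      show ?thesis unfolding nxt_def ge Fo using i by simp
    qed
    have arg: "\<forall>i<length out. out ! i \<in> ?A \<and>
        (\<forall>b\<in>?A. b \<noteq> out ! i \<longrightarrow> Pmodel ?A \<theta> (inp @ take i out) b < Pmodel ?A \<theta> (inp @ take i out) (out ! i))"
    proof (intro allI impI conjI ballI)
      fix i assume i: "i < length out"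
      show oA: "out ! i \<in> ?A" using outA i by auto
      fix b assume b: "b \<in> ?A" "b \<noteq> out ! i"
      have L: "\<And>a. logit \<theta> (inp @ take i out) a = (if a = out ! i then 1 else 0)"
        using H i nx[OF i] unfolding Fo by simp
      show "Pmodel ?A \<theta> (inp @ take i out) b < Pmodel ?A \<theta> (inp @ take i out) (out ! i)"
        by (rule Pmodel_ind[OF finA oA b(1) b(2) L])
    qed
    have csq: "cur_seq inp = P0 @ [Comma]" unfolding inp2 using DP0 by (intro cur_seq_app) simp
    have hdc: "hd (cur_seq inp) = Vert (last vs)" unfolding csq P0_def by simp
    have lastps: "fst (last ps) = last vs" unfolding ps_def using last_zip_eq[of vr G] lG False vs by simp
    have st: "stops inp out"
    proof -
      obtain pre where pre: "out = pre @ [Vert (fst (last ps)), Eq, Val (snd (last ps))]"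
        using render_last[OF psne] unfolding out_def by blast
      show ?thesis unfolding stops_def hdc
        by (rule exI[of _ "inp @ pre"], rule exI[of _ "snd (last ps)"]) (simp add: pre lastps)
    qed
    have nst: "\<forall>i<length out. \<not> stops inp (take i out)"
    proof (intro allI impI notI)
      fix i assume i: "i < length out" and sti: "stops inp (take i out)"
      obtain pre q where Z: "inp @ take i out = pre @ [Vert (last vs), Eq, Val q]"
        using sti unfolding stops_def hdc by blast
      define Z where "Z = inp @ take i out"
      have lZ: "length Z = length inp + i" unfolding Z_def using i by simp
      have Zl: "Z ! (length Z - 1) = Val q" and Z3: "Z ! (length Z - 3) = Vert (last vs)"
        using nth_last3[OF Z] unfolding Z_def by auto
      have linp: "length inp \<ge> 4" unfolding inp2 P0_def by simp
      have lastinp: "inp ! (length inp - 1) = Comma" unfolding inp2 by (simp add: nth_append)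
      have Zo: "Z ! (length inp + j) = out ! j" if "j < i" for j
        unfolding Z_def using that i by (simp add: nth_append)
      consider "i = 0" | "i = 1" | "i = 2" | "i \<ge> 3" by linarith
      then show False
      proof cases
        case 1
        then have "Z ! (length Z - 1) = Comma" unfolding Z_def using lastinp by simp
        then show False using Zl by simp
      next
        case 2
        then have "Z ! (length Z - 1) = out ! 0" using Zo[of 0] lZ by simp
        also have "\<dots> = Vert (fst (ps ! 0))"
        proof -
          have l0: "0 < length out" using i by (cases out) auto
          show ?thesis using render_nth[of 0 ps] l0 unfolding out_def by simp
        qed
        finally show False using Zl by simp
      next
        case 3
        then have "Z ! (length Z - 1) = out ! 1" using Zo[of 1] lZ by (simp add: eval_nat_numeral)
        also have "\<dots> = Eq"
        proof -
          have l1: "1 < length out" using i 3 by simp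
          show ?thesis using render_nth[of 1 ps] l1 unfolding out_def by simp
        qed
        finally show False using Zl by simp
      next
        case 4
        have "Z ! (length Z - 3) = out ! (i - 3)" using Zo[of "i - 3"] lZ 4 linp
          by (simp add: add_diff_assoc)
        then have ov: "out ! (i - 3) = Vert (last vs)" using Z3 by simp
        have il: "i - 3 < length out" using i by simp
        have rn: "out ! (i - 3) = (if (i - 3) mod 4 = 0 then Vert (fst (ps ! ((i - 3) div 4))) else if (i - 3) mod 4 = 1 then Eq
           else if (i - 3) mod 4 = 2 then Val (snd (ps ! ((i - 3) div 4))) else Comma)"
          using il unfolding out_def by (rule render_nth)
        have m0: "(i - 3) mod 4 = 0" and fm: "fst (ps ! ((i - 3) div 4)) = last vs"
          using ov rn by (auto split: if_splits)
        define m where "m = (i - 3) div 4"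
        have im: "i - 3 = 4 * m" unfolding m_def using m0 by auto
        have mlt: "Suc m < length vs - 1" using i lout im lps vs 4 by simp
        have "fst (ps ! m) = vr ! m" unfolding ps_def using mlt lG vs by simp
        also have "\<dots> = vs ! Suc m" unfolding vs by simp
        finally have "vs ! Suc m = last vs" using fm unfolding m_def by simp
        then show False using test_distinct_last[OF U(6) tl mlt] by simp
      qed
    qed
    have gr: "greedy_run ?A \<theta> inp out" using greedy_unique(1)[OF finA arg st nst] .
    have "\<forall>out'. greedy_run ?A \<theta> inp out' \<longrightarrow> dec out' = dec lab"
      using greedy_unique(2)[OF finA arg st nst] dec_eq by blast
    then show ?thesis unfolding test_correct_def using gr by blast
  qed
qed



lemma expectation_cong_pmf:
  fixes f g :: "'a \<Rightarrow> real"
  assumes "\<And>x. x \<in> set_pmf p \<Longrightarrow> f x = g x"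
  shows "measure_pmf.expectation p f = measure_pmf.expectation p g"
  by (rule integral_cong_AE) (auto intro!: AE_pmfI assms)

lemma data_sample:
  assumes "x \<in> set_pmf (data_pmf VALS CONT c V D k)"
  obtains vs ss where "vs \<in> set_pmf D" "length ss = Suc k"
    "\<forall>s\<in>set ss. s \<in> set_pmf (proc_pmf VALS CONT c V vs)"
    "fst x = fst (mk_kshot (take k ss) (ss ! k))" "snd x = snd (mk_kshot (take k ss) (ss ! k))"
  using assms unfolding data_set by auto

theorem theorem1:
  fixes Vall V :: "'v set" and E :: "('v \<times> 'v) set"
    and VALS :: "'v \<Rightarrow> int set" and CONT :: "'v \<Rightarrow> 'c set" and c :: "'v \<times> 'v \<Rightarrow> int"
    and K :: nat and Dtr Dte :: "'v list pmf" and \<epsilon> :: real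
  assumes "valid_structure Vall V E VALS CONT c"
    and "set_pmf Dtr \<subseteq> {vs. train_list Vall V E vs}" and "finite (set_pmf Dtr)"
    and "set_pmf Dte \<subseteq> {vs. test_list V E vs}"
    and "\<epsilon> > 0"
  shows "\<exists>\<theta>::('v, 'c) tparams.
           \<bar>train_loss Vall VALS CONT c V K Dtr \<theta>
              - (INF \<theta>'. train_loss Vall VALS CONT c V K Dtr \<theta>')\<bar> < \<epsilon> \<and>
           (\<forall>k\<in>{2..K}. test_loss Vall VALS CONT c V Dte k \<theta> = -1)"
proof -
  note vst = assms(1)
  note U = valid_unpack[OF vst]
  let ?A = "alphabet Vall VALS CONT"
  have finA: "finite ?A" by (rule finite_alph[OF vst])
  have trv: "set vs \<subseteq> Vall" "vs \<noteq> []" "chainE E (filter (\<lambda>v. v \<in> V) vs)"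
    "length (filter (\<lambda>v. v \<in> V) vs) < maxlen V E" if "vs \<in> set_pmf Dtr" for vs
  proof -
    have tl: "train_list Vall V E vs" using assms(2) that by blast
    then show "set vs \<subseteq> Vall" "length (filter (\<lambda>v. v \<in> V) vs) < maxlen V E"
      unfolding train_list_def by auto
    have ch: "is_chain V E (filter (\<lambda>v. v \<in> V) vs)" using tl unfolding train_list_def by blast
    then show "chainE E (filter (\<lambda>v. v \<in> V) vs)" by (rule is_chain_chainE)
    show "vs \<noteq> []" using ch unfolding is_chain_def by auto
  qed
  have tev: "test_list V E vs" "set vs \<subseteq> Vall" "filter (\<lambda>v. v \<in> V) vs = vs" "length vs = maxlen V E"
    if "vs \<in> set_pmf Dte" for vs
  proof -
    show tl: "test_list V E vs" using assms(4) that by blast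
    then have "set vs \<subseteq> V" unfolding test_list_def is_chain_def by auto
    then show "set vs \<subseteq> Vall" "filter (\<lambda>v. v \<in> V) vs = vs" using U(2) by (auto simp: subset_iff)
    show "length vs = maxlen V E" using tl unfolding test_list_def by auto
  qed
  have finte: "finite (set_pmf Dte)"
  proof (rule finite_subset[OF _ U(6)])
    show "set_pmf Dte \<subseteq> chains V E" using tev(1) unfolding chains_def test_list_def by blast
  qed
  define Str where "Str = (\<Union>k\<in>{1..<K}. \<Union>x\<in>set_pmf (data_pmf VALS CONT c V Dtr k).
      (\<lambda>t. fst x @ take t (snd x)) ` {1..<length (snd x)})"
  define Ste where "Ste = (\<Union>k\<in>{2..K}. \<Union>x\<in>set_pmf (data_pmf VALS CONT c V Dte k).
      (\<lambda>i. fst x @ take i (Fout c (fst x))) ` {..<length (Fout c (fst x))})"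
  have finStr: "finite Str" unfolding Str_def
    using data_fin[OF U(3) U(4) assms(3)] trv(1) by blast
  have finSte: "finite Ste" unfolding Ste_def
    using data_fin[OF U(3) U(4) finte] tev(2) by blast
  have inp_ne: "fst x \<noteq> []" if xx: "x \<in> set_pmf (data_pmf VALS CONT c V D k)" "0 < k" for x D k
  proof -
    obtain vs ss where "length ss = Suc k" "\<forall>s\<in>set ss. s \<in> set_pmf (proc_pmf VALS CONT c V vs)"
      "fst x = fst (mk_kshot (take k ss) (ss ! k))" using data_sample[OF xx(1)] by metis
    then show ?thesis using sample_basic(2)[OF xx(2)] by metis
  qed
  have vs_of: "map fst (dec (takeWhile (\<lambda>x. x \<noteq> Dlm) (fst x @ w))) = vs"
    if "0 < k" "length ss = Suc k" "\<forall>s\<in>set ss. s \<in> set_pmf (proc_pmf VALS CONT c V vs)"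
      "fst x = fst (mk_kshot (take k ss) (ss ! k))" for x w k ss vs
    using sample_basic(1)[OF that(1-3)] that(4) by simp
  have ne: "[] \<notin> Str \<union> Ste"
  proof
    assume "[] \<in> Str \<union> Ste"
    then show False unfolding Str_def Ste_def using inp_ne by fastforce
  qed
  have disj: "z \<notin> Str" if "z \<in> Ste" for z
  proof
    assume "z \<in> Str"
    then obtain k x t where k: "k \<in> {1..<K}" and x: "x \<in> set_pmf (data_pmf VALS CONT c V Dtr k)"
      and z: "z = fst x @ take t (snd x)" unfolding Str_def by blast
    obtain vs ss where vs: "vs \<in> set_pmf Dtr" "length ss = Suc k"
      "\<forall>s\<in>set ss. s \<in> set_pmf (proc_pmf VALS CONT c V vs)" "fst x = fst (mk_kshot (take k ss) (ss ! k))"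
      using data_sample[OF x] by metis
    have v1: "map fst (dec (takeWhile (\<lambda>x. x \<noteq> Dlm) z)) = vs"
      unfolding z vs(4) using sample_basic(1)[OF _ vs(2) vs(3)] k by simp
    from \<open>z \<in> Ste\<close> obtain k' y i where k': "k' \<in> {2..K}" and y: "y \<in> set_pmf (data_pmf VALS CONT c V Dte k')"
      and z': "z = fst y @ take i (Fout c (fst y))" unfolding Ste_def by blast
    obtain vs' ss' where vs': "vs' \<in> set_pmf Dte" "length ss' = Suc k'"
      "\<forall>s\<in>set ss'. s \<in> set_pmf (proc_pmf VALS CONT c V vs')" "fst y = fst (mk_kshot (take k' ss') (ss' ! k'))"
      using data_sample[OF y] by metis
    have v2: "map fst (dec (takeWhile (\<lambda>x. x \<noteq> Dlm) z)) = vs'"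
      unfolding z' vs'(4) using sample_basic(1)[OF _ vs'(2) vs'(3)] k' by simp
    have "vs = vs'" using v1 v2 by simp
    then show False using trv(4)[OF vs(1)] tev(3,4)[OF vs'(1)] by simp
  qed
  define L where "L = train_loss Vall VALS CONT c V K Dtr"
  have Lnn: "L \<theta> \<ge> 0" for \<theta>
    unfolding L_def train_loss_def
  proof (intro sum_nonneg integral_nonneg_AE AE_pmfI)
    fix k x assume x: "x \<in> set_pmf (data_pmf VALS CONT c V Dtr k)"
    obtain vs ss where vs: "vs \<in> set_pmf Dtr" "length ss = Suc k"
      "\<forall>s\<in>set ss. s \<in> set_pmf (proc_pmf VALS CONT c V vs)" "snd x = snd (mk_kshot (take k ss) (ss ! k))"
      using data_sample[OF x] by metis
    have "set (snd x) \<subseteq> ?A" unfolding vs(4)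
      using sample_lab_in_A[OF vst trv(1-3)[OF vs(1)] vs(2,3)] .
    then have "0 \<le> seq_loss ?A \<theta> (fst x) (snd x)" by (rule seq_loss_nonneg[OF finA])
    then show "0 \<le> (case x of (inp, lab) \<Rightarrow> seq_loss ?A \<theta> inp lab)" by (cases x) simp
  qed
  have bdd: "bdd_below (range L)" using Lnn by (intro bdd_belowI[of _ 0]) auto
  have "Inf (range L) < Inf (range L) + \<epsilon>" using assms(5) by simp
  then have "\<exists>x\<in>range L. x < Inf (range L) + \<epsilon>" by (intro cInf_lessD) auto
  then obtain \<theta>0 where th0: "L \<theta>0 < Inf (range L) + \<epsilon>" by auto
  have th0': "Inf (range L) \<le> L \<theta>0" using bdd by (intro cInf_lower) auto
  define h where "h z a = (if z \<in> Str then logit \<theta>0 z a else if a = nxt c z then 1 else 0)" for z a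
  obtain \<theta> :: "('v, 'c) tparams" where th: "\<forall>z\<in>Str \<union> Ste. \<forall>a. logit \<theta> z a = h z a"
    using memorize[OF _ ne, of h] finStr finSte by blast
  have Leq: "L \<theta> = L \<theta>0"
    unfolding L_def train_loss_def
  proof (intro sum.cong refl expectation_cong_pmf)
    fix k x assume k: "k \<in> {1..<K}" and x: "x \<in> set_pmf (data_pmf VALS CONT c V Dtr k)"
    have "seq_loss ?A \<theta> (fst x) (snd x) = seq_loss ?A \<theta>0 (fst x) (snd x)"
    proof (rule seq_loss_cong)
      fix t assume t: "t \<in> {1..<length (snd x)}"
      have "fst x @ take t (snd x) \<in> Str" unfolding Str_def using k x t by blast
      then show "logit \<theta> (fst x @ take t (snd x)) = logit \<theta>0 (fst x @ take t (snd x))"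
        using th unfolding h_def by auto
    qed
    then show "(case x of (inp, lab) \<Rightarrow> seq_loss ?A \<theta> inp lab) = (case x of (inp, lab) \<Rightarrow> seq_loss ?A \<theta>0 inp lab)"
      by (cases x) simp
  qed
  have test: "test_loss Vall VALS CONT c V Dte k \<theta> = -1" if k: "k \<in> {2..K}" for k
  proof -
    have "measure_pmf.prob (data_pmf VALS CONT c V Dte k) {(inp, lab). test_correct ?A \<theta> inp lab} = 1"
    proof (subst measure_pmf.prob_eq_1, simp, rule AE_pmfI)
      fix x assume x: "x \<in> set_pmf (data_pmf VALS CONT c V Dte k)"
      obtain vs ss where vs: "vs \<in> set_pmf Dte" "length ss = Suc k"
        "\<forall>s\<in>set ss. s \<in> set_pmf (proc_pmf VALS CONT c V vs)" "fst x = fst (mk_kshot (take k ss) (ss ! k))"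
        "snd x = snd (mk_kshot (take k ss) (ss ! k))"
        using data_sample[OF x] by metis
      have H: "\<forall>i < length (Fout c (fst x)). \<forall>a. logit \<theta> (fst x @ take i (Fout c (fst x))) a =
              (if a = nxt c (fst x @ take i (Fout c (fst x))) then 1 else 0)"
      proof (intro allI impI)
        fix i a assume i: "i < length (Fout c (fst x))"
        have zS: "fst x @ take i (Fout c (fst x)) \<in> Ste" unfolding Ste_def using k x i by blast
        then show "logit \<theta> (fst x @ take i (Fout c (fst x))) a =
              (if a = nxt c (fst x @ take i (Fout c (fst x))) then 1 else 0)"
          using th disj[OF zS] unfolding h_def by auto
      qed
      have "0 < k" using k by simp
      then have "test_correct ?A \<theta> (fst x) (snd x)"
        using test_sample[OF vst tev(1)[OF vs(1)] _ vs(2) vs(3) vs(4) vs(5) H] by simp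
      then show "x \<in> {(inp, lab). test_correct ?A \<theta> inp lab}" by (cases x) simp
    qed
    then show ?thesis unfolding test_loss_def by simp
  qed
  have "\<bar>L \<theta> - Inf (range L)\<bar> < \<epsilon>" using Leq th0 th0' by simp
  then show ?thesis using test unfolding L_def by blast
qed


end
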